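(* Let $E>0$ and let $(H_0,h)$ be one of (a) $H_0=E(\sigma_z\otimes I_2\otimes I_2+I_2\otimes\sigma_z\otimes I_2+I_2\otimes I_2\otimes\sigma_z)$, $h=E\sigma_z$; (b) $H_0=E\sum_{k=1}^3(\sigma_x^{(k)}+\sigma_y^{(k)})$, $h=E(\sigma_x+\sigma_y)$, where $\sigma^{(k)}$ denotes $\sigma$ acting on qubit $k$ and identity elsewhere. Set $H_A=H_B=H_C=h$. Let $H_{\mathrm{int}}$ be any Hermitian operator on $(\mathbb{C}^2)^{\otimes3}$ and $H=H_0+H_{\mathrm{int}}$. For any three-qubit density matrix $\varrho$ with single-qubit reduced states $\varrho_A,\varrho_B,\varrho_C$, if $\mathcal{C}(\varrho;H)\ge\mathcal{C}(\varrho;H_0)$ then $$\mathcal{C}(\varrho_A;H_A)+\mathcal{C}(\varrho_B;H_B)+\mathcal{C}(\varrho_C;H_C)\le\mathcal{C}(\varrho;H).$$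
   Context: Quantum battery capacity: for Hermitian $H$ on $\mathbb{C}^d$ with eigenvalues $\epsilon_0\le\dots\le\epsilon_{d-1}$ and density matrix $\rho$ with eigenvalues $\lambda_0\le\dots\le\lambda_{d-1}$, $\mathcal{C}(\rho;H)=\sum_i\epsilon_i(\lambda_i-\lambda_{d-1-i})$. $\sigma_x,\sigma_y,\sigma_z$ are the Pauli matrices. *)

theory Defs
  imports "Jordan_Normal_Form.Char_Poly" "HOL-Computational_Algebra.Polynomial"
begin

definition mtrace :: "complex mat \<Rightarrow> complex" where
  "mtrace A = (\<Sum>i<dim_row A. A $$ (i, i))"

definition hermitian :: "complex mat \<Rightarrow> bool" where
  "hermitian A \<longleftrightarrow> square_mat A \<and>
     (\<forall>i<dim_row A. \<forall>j<dim_col A. A $$ (i, j) = cnj (A $$ (j, i)))"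

definition psd :: "complex mat \<Rightarrow> bool" where
  "psd A \<longleftrightarrow> square_mat A \<and>
     (\<forall>v \<in> carrier_vec (dim_row A).
        (let q = (\<Sum>i<dim_row A. cnj (v $ i) * (A *\<^sub>v v) $ i) in q \<in> \<real> \<and> 0 \<le> Re q))"

definition density_matrix :: "nat \<Rightarrow> complex mat \<Rightarrow> bool" where
  "density_matrix d \<rho> \<longleftrightarrow> \<rho> \<in> carrier_mat d d \<and> hermitian \<rho> \<and> psd \<rho> \<and> mtrace \<rho> = 1"

definition kron :: "complex mat \<Rightarrow> complex mat \<Rightarrow> complex mat" where
  "kron A B = mat (dim_row A * dim_row B) (dim_col A * dim_col B)
     (\<lambda>(i, j). A $$ (i div dim_row B, j div dim_col B) * B $$ (i mod dim_row B, j mod dim_col B))"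

text \<open>For a Hermitian matrix all roots of the characteristic
  polynomial are real, so taking real parts loses nothing.\<close>
definition eigvals_sorted :: "complex mat \<Rightarrow> real list" where
  "eigvals_sorted A = sorted_list_of_multiset (image_mset Re (proots (char_poly A)))"

definition capacity :: "complex mat \<Rightarrow> complex mat \<Rightarrow> real" where
  "capacity \<rho> H = (let d = dim_row H; ev = eigvals_sorted H; lv = eigvals_sorted \<rho> in
     (\<Sum>i<d. ev ! i * (lv ! i - lv ! (d - 1 - i))))"

definition I2 :: "complex mat" where "I2 = 1\<^sub>m 2"
definition sigma_x :: "complex mat" where "sigma_x = mat_of_rows_list 2 [[0, 1], [1, 0]]"
definition sigma_y :: "complex mat" where "sigma_y = mat_of_rows_list 2 [[0, -\<i>], [\<i>, 0]]"
definition sigma_z :: "complex mat" where "sigma_z = mat_of_rows_list 2 [[1, 0], [0, -1]]"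

definition on_qubit :: "nat \<Rightarrow> complex mat \<Rightarrow> complex mat" where
  "on_qubit k s = (if k = 1 then kron s (kron I2 I2)
                   else if k = 2 then kron I2 (kron s I2)
                   else kron I2 (kron I2 s))"

definition red_A :: "complex mat \<Rightarrow> complex mat" where
  "red_A \<rho> = mat 2 2 (\<lambda>(i, j). \<Sum>b<2. \<Sum>c<2. \<rho> $$ (4*i + 2*b + c, 4*j + 2*b + c))"
definition red_B :: "complex mat \<Rightarrow> complex mat" where
  "red_B \<rho> = mat 2 2 (\<lambda>(i, j). \<Sum>a<2. \<Sum>c<2. \<rho> $$ (4*a + 2*i + c, 4*a + 2*j + c))"
definition red_C :: "complex mat \<Rightarrow> complex mat" where
  "red_C \<rho> = mat 2 2 (\<lambda>(i, j). \<Sum>a<2. \<Sum>b<2. \<rho> $$ (4*a + 2*b + i, 4*a + 2*b + j))"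

definition H0_a :: "real \<Rightarrow> complex mat" where
  "H0_a E = complex_of_real E \<cdot>\<^sub>m
     (on_qubit 1 sigma_z + on_qubit 2 sigma_z + on_qubit 3 sigma_z)"
definition h_a :: "real \<Rightarrow> complex mat" where
  "h_a E = complex_of_real E \<cdot>\<^sub>m sigma_z"

definition H0_b :: "real \<Rightarrow> complex mat" where
  "H0_b E = complex_of_real E \<cdot>\<^sub>m
     ((on_qubit 1 sigma_x + on_qubit 1 sigma_y) + (on_qubit 2 sigma_x + on_qubit 2 sigma_y)
      + (on_qubit 3 sigma_x + on_qubit 3 sigma_y))"
definition h_b :: "real \<Rightarrow> complex mat" where
  "h_b E = complex_of_real E \<cdot>\<^sub>m (sigma_x + sigma_y)"

end

theory Submission
  imports Defs "HOL-Combinatorics.Permutations" "Jordan_Normal_Form.Schur_Decomposition"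
begin

lemma proots_lin_prod: "proots (\<Prod>a\<leftarrow>as. [:-a,1:]) = mset (as::complex list)"
proof (induct as)
  case (Cons a as)
  have nz: "(\<Prod>a\<leftarrow>as. [:-a,1:]) \<noteq> (0::complex poly)"
    by (auto simp: prod_list_zero_iff)
  have "proots ([:-a,1:] * (\<Prod>a\<leftarrow>as. [:-a,1:])) = proots [:-a,1:] + proots (\<Prod>a\<leftarrow>as. [:-a,1:])"
    by (rule proots_mult) (use nz in auto)
  then show ?case using Cons proots_linear_factor[of "-a"] by simp
qed simp

lemma eigvals_factored:
  assumes "char_poly A = (\<Prod>a\<leftarrow>as. [:-a,1:])"
  shows "eigvals_sorted A = sort (map Re as)"
  unfolding eigvals_sorted_def assms proots_lin_prod by (simp flip: mset_map)

lemma mult_entry: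
  assumes "A \<in> carrier_mat n m" "B \<in> carrier_mat m k" "i < n" "j < k"
  shows "(A * B) $$ (i,j) = (\<Sum>l<m. A $$ (i,l) * B $$ (l,j))"
  using assms by (simp add: scalar_prod_def atLeast0LessThan)

definition ip :: "nat \<Rightarrow> (nat \<Rightarrow> complex) \<Rightarrow> (nat \<Rightarrow> complex) \<Rightarrow> complex" where
  "ip n x y = (\<Sum>i<n. cnj (x i) * y i)"

definition mv :: "nat \<Rightarrow> complex mat \<Rightarrow> (nat \<Rightarrow> complex) \<Rightarrow> nat \<Rightarrow> complex" where
  "mv n A x = (\<lambda>i. \<Sum>m<n. A $$ (i,m) * x m)"

definition SPAN :: "nat \<Rightarrow> (nat \<Rightarrow> nat \<Rightarrow> complex) \<Rightarrow> nat \<Rightarrow> (nat \<Rightarrow> complex) set" where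
  "SPAN n f k = {v. \<exists>s. \<forall>i<n. v i = (\<Sum>l<k. s l * f l i)}"

lemma SPAN_zero: "(\<lambda>i. 0) \<in> SPAN n f k"
  unfolding SPAN_def by (rule CollectI, rule exI[of _ "\<lambda>l. 0"]) simp

lemma SPAN_add: "v \<in> SPAN n f k \<Longrightarrow> w \<in> SPAN n f k \<Longrightarrow> (\<lambda>i. v i + w i) \<in> SPAN n f k"
  unfolding SPAN_def
proof (clarify)
  fix s t assume "\<forall>i<n. v i = (\<Sum>l<k. s l * f l i)" "\<forall>i<n. w i = (\<Sum>l<k. t l * f l i)"
  then show "\<exists>u. \<forall>i<n. v i + w i = (\<Sum>l<k. u l * f l i)"
    by (intro exI[of _ "\<lambda>l. s l + t l"]) (simp add: sum.distrib distrib_right)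
qed

lemma SPAN_scale: "v \<in> SPAN n f k \<Longrightarrow> (\<lambda>i. c * v i) \<in> SPAN n f k"
  unfolding SPAN_def
proof (clarify)
  fix s assume "\<forall>i<n. v i = (\<Sum>l<k. s l * f l i)"
  then show "\<exists>u. \<forall>i<n. c * v i = (\<Sum>l<k. u l * f l i)"
    by (intro exI[of _ "\<lambda>l. c * s l"]) (simp add: sum_distrib_left mult.assoc)
qed

lemma SPAN_diff: "v \<in> SPAN n f k \<Longrightarrow> w \<in> SPAN n f k \<Longrightarrow> (\<lambda>i. v i - w i) \<in> SPAN n f k"
  using SPAN_add[of v n f k "\<lambda>i. (-1) * w i"] SPAN_scale[of w n f k "-1"] by simp

lemma SPAN_sum: "finite S \<Longrightarrow> (\<And>j. j \<in> S \<Longrightarrow> F j \<in> SPAN n f k) \<Longrightarrow> (\<lambda>i. \<Sum>j\<in>S. F j i) \<in> SPAN n f k"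
proof (induct S rule: finite_induct)
  case empty then show ?case using SPAN_zero by simp
next
  case (insert x S)
  then show ?case using SPAN_add[of "F x" n f k "\<lambda>i. \<Sum>j\<in>S. F j i"] by simp
qed

lemma SPAN_gen: "l < k \<Longrightarrow> f l \<in> SPAN n f k"
  unfolding SPAN_def
proof (rule CollectI, rule exI[of _ "\<lambda>j. if j = l then 1 else 0"], intro allI impI)
  fix i assume "l < k" "i < n"
  have "(\<Sum>j<k. (if j = l then 1 else 0) * f j i) = (\<Sum>j<k. if j = l then f j i else 0)"
    by (rule sum.cong) auto
  also have "\<dots> = f l i" using \<open>l < k\<close> by (simp add: sum.delta)
  finally show "f l i = (\<Sum>j<k. (if j = l then 1 else 0) * f j i)" by simp
qed

lemma SPAN_mono: "k \<le> k' \<Longrightarrow> v \<in> SPAN n f k \<Longrightarrow> v \<in> SPAN n f k'"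
  unfolding SPAN_def
proof (clarify)
  fix s assume kk: "k \<le> k'" and s: "\<forall>i<n. v i = (\<Sum>l<k. s l * f l i)"
  show "\<exists>u. \<forall>i<n. v i = (\<Sum>l<k'. u l * f l i)"
  proof (intro exI[of _ "\<lambda>l. if l < k then s l else 0"] allI impI)
    fix i assume "i < n"
    have "(\<Sum>l<k'. (if l < k then s l else 0) * f l i) = (\<Sum>l<k'. if l \<in> {l. l < k} then s l * f l i else 0)"
      by (rule sum.cong) auto
    also have "\<dots> = (\<Sum>l\<in>{..<k'} \<inter> {l. l < k}. s l * f l i)"
      by (simp add: sum.inter_restrict)
    also have "{..<k'} \<inter> {l. l < k} = {..<k}" using kk by auto
    finally show "v i = (\<Sum>l<k'. (if l < k then s l else 0) * f l i)" using s \<open>i<n\<close> by simp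
  qed
qed

lemma SPAN_trans: "v \<in> SPAN n f k \<Longrightarrow> (\<And>l. l < k \<Longrightarrow> f l \<in> SPAN n h m) \<Longrightarrow> v \<in> SPAN n h m"
proof -
  assume v: "v \<in> SPAN n f k" and fl: "\<And>l. l < k \<Longrightarrow> f l \<in> SPAN n h m"
  from v obtain s where s: "\<forall>i<n. v i = (\<Sum>l<k. s l * f l i)" unfolding SPAN_def by auto
  have "(\<lambda>i. \<Sum>l<k. s l * f l i) \<in> SPAN n h m"
    by (rule SPAN_sum) (auto intro: SPAN_scale fl)
  then obtain t where t: "\<forall>i<n. (\<Sum>l<k. s l * f l i) = (\<Sum>j<m. t j * h j i)" unfolding SPAN_def by auto
  show ?thesis unfolding SPAN_def using s t by auto
qed

lemma SPAN_cong: "v \<in> SPAN n f k \<Longrightarrow> (\<And>i. i < n \<Longrightarrow> w i = v i) \<Longrightarrow> w \<in> SPAN n f k"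
  unfolding SPAN_def by auto

lemma ip_orth_SPAN:
  assumes "v \<in> SPAN n f k" "\<And>l. l < k \<Longrightarrow> ip n x (f l) = 0"
  shows "ip n x v = 0"
proof -
  from assms(1) obtain s where s: "\<forall>i<n. v i = (\<Sum>l<k. s l * f l i)" unfolding SPAN_def by auto
  have "ip n x v = (\<Sum>i<n. cnj (x i) * (\<Sum>l<k. s l * f l i))" unfolding ip_def using s by simp
  also have "\<dots> = (\<Sum>i<n. \<Sum>l<k. s l * (cnj (x i) * f l i))" by (simp add: sum_distrib_left mult_ac)
  also have "\<dots> = (\<Sum>l<k. \<Sum>i<n. s l * (cnj (x i) * f l i))" by (rule sum.swap)
  also have "\<dots> = (\<Sum>l<k. s l * ip n x (f l))" by (simp add: ip_def sum_distrib_left)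
  also have "\<dots> = 0" using assms(2) by simp
  finally show ?thesis .
qed

lemma mv_SPAN:
  assumes "v \<in> SPAN n f k"
  shows "mv n A v \<in> SPAN n (\<lambda>l. mv n A (f l)) k"
proof -
  from assms obtain s where s: "\<forall>i<n. v i = (\<Sum>l<k. s l * f l i)" unfolding SPAN_def by auto
  show ?thesis unfolding SPAN_def
  proof (intro CollectI exI[of _ s] allI impI)
    fix i assume "i < n"
    have "mv n A v i = (\<Sum>m<n. A $$ (i,m) * (\<Sum>l<k. s l * f l m))" unfolding mv_def using s by simp
    also have "\<dots> = (\<Sum>m<n. \<Sum>l<k. s l * (A $$ (i,m) * f l m))" by (simp add: sum_distrib_left mult_ac)
    also have "\<dots> = (\<Sum>l<k. \<Sum>m<n. s l * (A $$ (i,m) * f l m))" by (rule sum.swap)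
    also have "\<dots> = (\<Sum>l<k. s l * mv n A (f l) i)" by (simp add: mv_def sum_distrib_left)
    finally show "mv n A v i = (\<Sum>l<k. s l * mv n A (f l) i)" .
  qed
qed

lemma ip_cnj: "ip n y x = cnj (ip n x y)"
  unfolding ip_def by (simp add: mult.commute)

lemma ip_self: "ip n x x = of_real (\<Sum>i<n. (cmod (x i))^2)"
proof -
  have "\<And>i. cnj (x i) * x i = of_real ((cmod (x i))^2)" by (metis complex_norm_square mult.commute)
  then show ?thesis unfolding ip_def of_real_sum by simp
qed

lemma ip_self_nz: "(\<exists>i<n. x i \<noteq> 0) \<Longrightarrow> ip n x x \<noteq> 0"
proof -
  assume "\<exists>i<n. x i \<noteq> 0"
  then obtain i where i: "i < n" "x i \<noteq> 0" by auto
  have "0 < (cmod (x i))^2" using i by simp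
  also have "\<dots> \<le> (\<Sum>i<n. (cmod (x i))^2)"
    by (rule member_le_sum) (use i in auto)
  finally have "0 < (\<Sum>i<n. (cmod (x i))^2)" .
  then show ?thesis unfolding ip_self of_real_eq_0_iff by simp
qed

lemma hermD:
  assumes "hermitian A" "A \<in> carrier_mat n n" "i < n" "j < n"
  shows "A $$ (i,j) = cnj (A $$ (j,i))"
proof -
  have H: "\<forall>i<dim_row A. \<forall>j<dim_col A. A $$ (i, j) = cnj (A $$ (j, i))"
    using assms(1)[unfolded hermitian_def] by (rule conjunct2)
  have d: "i < dim_row A" "j < dim_col A" using assms(2,3,4) by auto
  show ?thesis by (rule H[rule_format, OF d])
qed

lemma herm_ip:
  assumes "hermitian A" "A \<in> carrier_mat n n"
  shows "ip n x (mv n A y) = cnj (ip n y (mv n A x))"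
proof -
  have h: "\<And>i j. i < n \<Longrightarrow> j < n \<Longrightarrow> A $$ (i,j) = cnj (A $$ (j,i))"
    using hermD[OF assms] by blast
  have "cnj (ip n y (mv n A x)) = (\<Sum>m<n. y m * (\<Sum>i<n. cnj (A $$ (m,i)) * cnj (x i)))"
    unfolding ip_def mv_def cnj_sum complex_cnj_mult complex_cnj_cnj by simp
  also have "\<dots> = (\<Sum>m<n. \<Sum>i<n. y m * cnj (A $$ (m,i)) * cnj (x i))"
    by (simp add: sum_distrib_left mult.assoc)
  also have "\<dots> = (\<Sum>m<n. \<Sum>i<n. y m * A $$ (i,m) * cnj (x i))"
  proof (rule sum.cong[OF refl], rule sum.cong[OF refl])
    fix m i assume "m \<in> {..<n}" "i \<in> {..<n}"
    then show "y m * cnj (A $$ (m,i)) * cnj (x i) = y m * A $$ (i,m) * cnj (x i)" using h[of i m] by simp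
  qed
  also have "\<dots> = (\<Sum>i<n. \<Sum>m<n. y m * A $$ (i,m) * cnj (x i))" by (rule sum.swap)
  also have "\<dots> = (\<Sum>i<n. cnj (x i) * (\<Sum>m<n. A $$ (i,m) * y m))"
    by (simp add: sum_distrib_left mult.commute mult.left_commute)
  also have "\<dots> = ip n x (mv n A y)"
    unfolding ip_def mv_def by simp
  finally show ?thesis by simp
qed

fun gs :: "nat \<Rightarrow> (nat \<Rightarrow> nat \<Rightarrow> complex) \<Rightarrow> nat \<Rightarrow> nat \<Rightarrow> complex" where
  "gs n p k = (\<lambda>i. p k i - (\<Sum>j<k. (ip n (gs n p j) (p k) / ip n (gs n p j) (gs n p j)) * gs n p j i))"

declare gs.simps[simp del]

lemma ip_lin: "ip n x (\<lambda>i. a i - (\<Sum>l\<in>S. c l * y l i)) = ip n x a - (\<Sum>l\<in>S. c l * ip n x (y l))"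
proof -
  have "ip n x (\<lambda>i. a i - (\<Sum>l\<in>S. c l * y l i)) = ip n x a - (\<Sum>i<n. \<Sum>l\<in>S. cnj (x i) * (c l * y l i))"
    unfolding ip_def by (simp add: right_diff_distrib sum_subtractf sum_distrib_left)
  also have "(\<Sum>i<n. \<Sum>l\<in>S. cnj (x i) * (c l * y l i)) = (\<Sum>l\<in>S. \<Sum>i<n. cnj (x i) * (c l * y l i))"
    by (rule sum.swap)
  also have "\<dots> = (\<Sum>l\<in>S. c l * ip n x (y l))"
    unfolding ip_def by (simp add: sum_distrib_left mult.left_commute)
  finally show ?thesis .
qed

lemma sum_upto_zero:
  fixes n k :: nat
  assumes "k \<le> n" "\<And>m. k \<le> m \<Longrightarrow> m < n \<Longrightarrow> f m = 0"
  shows "(\<Sum>m<n. f m) = (\<Sum>m<k. f m)"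
proof -
  show ?thesis
  proof (rule sum.mono_neutral_right)
    show "finite {..<n}" by simp
    show "{..<k} \<subseteq> {..<n}" using assms(1) by auto
    show "\<forall>i\<in>{..<n} - {..<k}. f i = 0" using assms(2) by auto
  qed
qed

context
  fixes n :: nat and P :: "complex mat"
  assumes P: "P \<in> carrier_mat n n" and Pinv: "\<exists>Q \<in> carrier_mat n n. Q * P = 1\<^sub>m n"
begin

abbreviation "pc \<equiv> (\<lambda>k i. P $$ (i,k))"
abbreviation "g \<equiv> gs n pc"

lemma g_eq: "g k i = pc k i - (\<Sum>j<k. (ip n (g j) (pc k) / ip n (g j) (g j)) * g j i)"
  by (subst gs.simps) simp

lemma g_SPANp: "(\<lambda>i. g k i - pc k i) \<in> SPAN n pc k"
proof (induct k rule: less_induct)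
  case (less k)
  have gj: "g j \<in> SPAN n pc k" if "j < k" for j
  proof -
    have "(\<lambda>i. g j i - pc j i) \<in> SPAN n pc k" using less[OF that] SPAN_mono[of j k] that by auto
    then have "(\<lambda>i. (g j i - pc j i) + pc j i) \<in> SPAN n pc k" using SPAN_add SPAN_gen[OF that] by blast
    then show ?thesis by simp
  qed
  have "(\<lambda>i. \<Sum>j<k. (ip n (g j) (pc k) / ip n (g j) (g j)) * g j i) \<in> SPAN n pc k"
    by (rule SPAN_sum[OF finite_lessThan], rule SPAN_scale, rule gj) simp
  then have "(\<lambda>i. -1 * (\<Sum>j<k. (ip n (g j) (pc k) / ip n (g j) (g j)) * g j i)) \<in> SPAN n pc k"
    by (rule SPAN_scale)
  then show ?case by (rule SPAN_cong) (simp add: g_eq[of k])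
qed

lemma g_nz: assumes k: "k < n" shows "\<exists>i<n. g k i \<noteq> 0"
proof (rule ccontr)
  assume "\<not> (\<exists>i<n. g k i \<noteq> 0)"
  then have z: "\<And>i. i < n \<Longrightarrow> g k i = 0" by auto
  obtain s where s: "\<forall>i<n. g k i - pc k i = (\<Sum>l<k. s l * pc l i)"
    using g_SPANp[of k] unfolding SPAN_def by auto
  obtain Q where Q: "Q \<in> carrier_mat n n" "Q * P = 1\<^sub>m n" using Pinv by auto
  define x where "x l = (if l < k then s l else if l = k then 1 else 0)" for l
  have Px: "(\<Sum>l<n. P $$ (i,l) * x l) = 0" if i: "i < n" for i
  proof -
    have "(\<Sum>l<n. P $$ (i,l) * x l) = (\<Sum>l<Suc k. P $$ (i,l) * x l)"
      by (rule sum_upto_zero) (use k in \<open>auto simp: x_def\<close>)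
    also have "\<dots> = (\<Sum>l<k. s l * pc l i) + pc k i"
      by (simp add: x_def mult.commute)
    also have "\<dots> = (g k i - pc k i) + pc k i"
      using s i by simp
    also have "\<dots> = 0" using z[OF i] by simp
    finally show ?thesis .
  qed
  have "(\<Sum>l<n. (Q * P) $$ (k,l) * x l) = (\<Sum>l<n. if l = k then x l else 0)"
    by (rule sum.cong) (use Q(2) k in auto)
  then have "x k = (\<Sum>l<n. (Q * P) $$ (k,l) * x l)" using k by simp
  also have "\<dots> = (\<Sum>l<n. (\<Sum>i<n. Q $$ (k,i) * P $$ (i,l)) * x l)"
    by (rule sum.cong[OF refl], subst mult_entry[OF Q(1) P], use k in auto)
  also have "\<dots> = (\<Sum>l<n. \<Sum>i<n. Q $$ (k,i) * P $$ (i,l) * x l)"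
    by (simp add: sum_distrib_right)
  also have "\<dots> = (\<Sum>i<n. \<Sum>l<n. Q $$ (k,i) * P $$ (i,l) * x l)" by (rule sum.swap)
  also have "\<dots> = (\<Sum>i<n. Q $$ (k,i) * (\<Sum>l<n. P $$ (i,l) * x l))"
    by (simp add: sum_distrib_left mult.assoc)
  also have "\<dots> = 0" using Px by simp
  finally show False unfolding x_def by simp
qed

lemma g_ipnz: "k < n \<Longrightarrow> ip n (g k) (g k) \<noteq> 0"
  using g_nz ip_self_nz by blast

lemma g_orth: "k < n \<Longrightarrow> j < k \<Longrightarrow> ip n (g j) (g k) = 0"
proof (induct k arbitrary: j rule: less_induct)
  case (less k)
  define c where "c l = ip n (g l) (pc k) / ip n (g l) (g l)" for l
  have gk: "g k = (\<lambda>i. pc k i - (\<Sum>l<k. c l * g l i))"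
    by (rule ext) (simp add: g_eq[of k] c_def)
  have o: "ip n (g j) (g l) = 0" if "l < k" "l \<noteq> j" for l
  proof (cases "j < l")
    case True then show ?thesis using less(1)[of l j] that less(2) by auto
  next
    case False then have "l < j" using that by auto
    then have "ip n (g l) (g j) = 0" using less(1)[of j l] less(2,3) by auto
    then show ?thesis using ip_cnj[of n "g j" "g l"] by simp
  qed
  have "ip n (g j) (g k) = ip n (g j) (pc k) - (\<Sum>l<k. c l * ip n (g j) (g l))"
    unfolding gk by (rule ip_lin)
  also have "(\<Sum>l<k. c l * ip n (g j) (g l)) = c j * ip n (g j) (g j)"
  proof -
    have "(\<Sum>l<k. c l * ip n (g j) (g l)) = c j * ip n (g j) (g j) + (\<Sum>l\<in>{..<k} - {j}. c l * ip n (g j) (g l))"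
      by (rule sum.remove) (use less in auto)
    also have "(\<Sum>l\<in>{..<k} - {j}. c l * ip n (g j) (g l)) = 0"
      by (rule sum.neutral) (use o in auto)
    finally show ?thesis by simp
  qed
  also have "c j * ip n (g j) (g j) = ip n (g j) (pc k)"
    unfolding c_def using g_ipnz[of j] less by simp
  finally show ?case by simp
qed

end

lemma mv_scale: "mv n A (\<lambda>i. c * x i) = (\<lambda>i. c * mv n A x i)"
  unfolding mv_def by (simp add: sum_distrib_left mult.left_commute)

lemma ip_scale: "ip n (\<lambda>i. a * x i) (\<lambda>i. b * y i) = cnj a * b * ip n x y"
  unfolding ip_def by (simp add: sum_distrib_left mult_ac)

context
  fixes n :: nat and A P B :: "complex mat"
  assumes A: "A \<in> carrier_mat n n" and P: "P \<in> carrier_mat n n"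
    and Pinv: "\<exists>Q \<in> carrier_mat n n. Q * P = 1\<^sub>m n"
    and B: "B \<in> carrier_mat n n" and AP: "A * P = P * B" and ut: "upper_triangular B"
    and herm: "hermitian A"
begin

abbreviation "pp \<equiv> pc P"
abbreviation "gg \<equiv> gs n (pc P)"

lemma Apc: assumes l: "l < n" shows "mv n A (pp l) \<in> SPAN n pp (Suc l)"
  unfolding SPAN_def
proof (intro CollectI exI[of _ "\<lambda>m. B $$ (m,l)"] allI impI)
  fix i assume i: "i < n"
  have "mv n A (pp l) i = (A * P) $$ (i,l)"
    unfolding mv_def by (rule mult_entry[OF A P i l, symmetric])
  also have "\<dots> = (P * B) $$ (i,l)" using AP by simp
  also have "\<dots> = (\<Sum>m<n. P $$ (i,m) * B $$ (m,l))" by (rule mult_entry[OF P B i l])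
  also have "\<dots> = (\<Sum>m<Suc l. P $$ (i,m) * B $$ (m,l))"
  proof (rule sum_upto_zero)
    show "Suc l \<le> n" using l by simp
    fix m assume "Suc l \<le> m" "m < n"
    then have "B $$ (m,l) = 0" using ut B unfolding upper_triangular_def by auto
    then show "P $$ (i,m) * B $$ (m,l) = 0" by simp
  qed
  finally show "mv n A (pp l) i = (\<Sum>m<Suc l. B $$ (m,l) * pp m i)" by (simp add: mult.commute)
qed

lemma pc_SPANg: "pp l \<in> SPAN n gg (Suc l)"
proof -
  have "(\<lambda>i. \<Sum>j<l. (ip n (gg j) (pp l) / ip n (gg j) (gg j)) * gg j i) \<in> SPAN n gg (Suc l)"
    by (rule SPAN_sum[OF finite_lessThan], rule SPAN_scale, rule SPAN_gen) simp
  then have "(\<lambda>i. gg l i + (\<Sum>j<l. (ip n (gg j) (pp l) / ip n (gg j) (gg j)) * gg j i)) \<in> SPAN n gg (Suc l)"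
    by (intro SPAN_add SPAN_gen) simp_all
  then show ?thesis by (rule SPAN_cong) (simp add: g_eq[OF P Pinv, of l])
qed

lemma g_SPANp': "gg k \<in> SPAN n pp (Suc k)"
proof -
  have "(\<lambda>i. gg k i - pp k i) \<in> SPAN n pp (Suc k)"
    using g_SPANp[OF P Pinv, of k] SPAN_mono[of k "Suc k"] by auto
  then have "(\<lambda>i. (gg k i - pp k i) + pp k i) \<in> SPAN n pp (Suc k)"
    by (intro SPAN_add SPAN_gen) simp_all
  then show ?thesis by simp
qed

lemma Ag: assumes k: "k < n" shows "mv n A (gg k) \<in> SPAN n gg (Suc k)"
proof -
  have 1: "mv n A (gg k) \<in> SPAN n (\<lambda>l. mv n A (pp l)) (Suc k)" by (rule mv_SPAN[OF g_SPANp'])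
  have 2: "mv n A (gg k) \<in> SPAN n pp (Suc k)"
  proof (rule SPAN_trans[OF 1])
    fix l assume "l < Suc k"
    then show "mv n A (pp l) \<in> SPAN n pp (Suc k)"
      using Apc[of l] k SPAN_mono[of "Suc l" "Suc k"] by auto
  qed
  show ?thesis
  proof (rule SPAN_trans[OF 2])
    fix l assume "l < Suc k"
    then show "pp l \<in> SPAN n gg (Suc k)"
      using pc_SPANg[of l] SPAN_mono[of "Suc l" "Suc k"] by auto
  qed
qed

lemma T_zero_lt: assumes "k < j" "j < n" shows "ip n (gg j) (mv n A (gg k)) = 0"
proof (rule ip_orth_SPAN[OF Ag])
  show "k < n" using assms by simp
  fix l assume "l < Suc k"
  then have "ip n (gg l) (gg j) = 0" using g_orth[OF P Pinv, of j l] assms by auto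
  then show "ip n (gg j) (gg l) = 0" using ip_cnj[of n "gg j" "gg l"] by simp
qed

lemma T_zero: assumes "j < n" "k < n" "j \<noteq> k" shows "ip n (gg j) (mv n A (gg k)) = 0"
proof (cases "k < j")
  case True then show ?thesis using T_zero_lt assms by blast
next
  case False then have "j < k" using assms by auto
  then have "ip n (gg k) (mv n A (gg j)) = 0" using T_zero_lt assms by blast
  then show ?thesis using herm_ip[OF herm A, of "gg j" "gg k"] by simp
qed

definition "Nrm k = Re (ip n (gg k) (gg k))"
definition "e k = (\<lambda>i. complex_of_real (1 / sqrt (Nrm k)) * gg k i)"

lemma Nrm_pos: "k < n \<Longrightarrow> Nrm k > 0"
proof -
  assume k: "k < n"
  have "ip n (gg k) (gg k) = of_real (Nrm k)" unfolding Nrm_def ip_self by simp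
  moreover have "Nrm k \<ge> 0" unfolding Nrm_def ip_self by (simp add: sum_nonneg)
  ultimately show ?thesis using g_ipnz[OF P Pinv k] by fastforce
qed

lemma e_orth: "j < n \<Longrightarrow> k < n \<Longrightarrow> ip n (e j) (e k) = (if j = k then 1 else 0)"
proof -
  assume j: "j < n" and k: "k < n"
  have "ip n (e j) (e k) = complex_of_real (1 / sqrt (Nrm j)) * complex_of_real (1 / sqrt (Nrm k)) * ip n (gg j) (gg k)"
    unfolding e_def ip_scale by simp
  moreover have "ip n (gg k) (gg k) = of_real (Nrm k)" unfolding Nrm_def ip_self by simp
  moreover have "j \<noteq> k \<Longrightarrow> ip n (gg j) (gg k) = 0"
    using g_orth[OF P Pinv] ip_cnj[of n "gg j" "gg k"] j k by (cases "j < k") auto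
  moreover have "sqrt (Nrm k) * sqrt (Nrm k) = Nrm k" using Nrm_pos[OF k] by simp
  ultimately show ?thesis using Nrm_pos[OF k]
    by (auto simp flip: of_real_mult simp: field_simps)
qed

lemma e_T: "j < n \<Longrightarrow> k < n \<Longrightarrow> j \<noteq> k \<Longrightarrow> ip n (e j) (mv n A (e k)) = 0"
  unfolding e_def mv_scale ip_scale using T_zero by simp


definition "Wm = mat n n (\<lambda>(i,k). e k i)"
definition "Wa = mat n n (\<lambda>(i,j). cnj (Wm $$ (j,i)))"
definition "Tm = Wa * A * Wm"

lemma Wm: "Wm \<in> carrier_mat n n" unfolding Wm_def by simp
lemma Wa: "Wa \<in> carrier_mat n n" unfolding Wa_def by simp
lemma Tm: "Tm \<in> carrier_mat n n" unfolding Tm_def using Wm Wa A by simp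

lemma WaW: "Wa * Wm = 1\<^sub>m n"
proof (rule eq_matI)
  fix j k assume j: "j < dim_row (1\<^sub>m n)" and k: "k < dim_col (1\<^sub>m n)"
  then have j': "j < n" and k': "k < n" by auto
  have "(Wa * Wm) $$ (j,k) = (\<Sum>i<n. Wa $$ (j,i) * Wm $$ (i,k))" by (rule mult_entry[OF Wa Wm j' k'])
  also have "\<dots> = ip n (e j) (e k)" unfolding ip_def
    by (rule sum.cong) (use j' k' in \<open>auto simp: Wa_def Wm_def\<close>)
  also have "\<dots> = 1\<^sub>m n $$ (j,k)" using e_orth[OF j' k'] j' k' by simp
  finally show "(Wa * Wm) $$ (j,k) = 1\<^sub>m n $$ (j,k)" .
qed (use Wa Wm in auto)

lemma WWa: "Wm * Wa = 1\<^sub>m n"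
  by (rule mat_mult_left_right_inverse[OF Wa Wm WaW])

lemma Tm_entry: assumes j: "j < n" and k: "k < n" shows "Tm $$ (j,k) = ip n (e j) (mv n A (e k))"
proof -
  have WaA: "Wa * A \<in> carrier_mat n n" using Wa A by simp
  have "Tm $$ (j,k) = (\<Sum>m<n. (Wa * A) $$ (j,m) * Wm $$ (m,k))"
    unfolding Tm_def by (rule mult_entry[OF WaA Wm j k])
  also have "\<dots> = (\<Sum>m<n. (\<Sum>i<n. cnj (e j i) * A $$ (i,m)) * e k m)"
  proof (rule sum.cong[OF refl])
    fix m assume "m \<in> {..<n}"
    then have m: "m < n" by simp
    have "(Wa * A) $$ (j,m) = (\<Sum>i<n. Wa $$ (j,i) * A $$ (i,m))" by (rule mult_entry[OF Wa A j m])
    also have "\<dots> = (\<Sum>i<n. cnj (e j i) * A $$ (i,m))"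
      by (rule sum.cong) (use j in \<open>auto simp: Wa_def Wm_def\<close>)
    finally show "(Wa * A) $$ (j,m) * Wm $$ (m,k) = (\<Sum>i<n. cnj (e j i) * A $$ (i,m)) * e k m"
      using m k by (simp add: Wm_def)
  qed
  also have "\<dots> = (\<Sum>m<n. \<Sum>i<n. cnj (e j i) * (A $$ (i,m) * e k m))"
    by (simp add: sum_distrib_right mult.assoc)
  also have "\<dots> = (\<Sum>i<n. \<Sum>m<n. cnj (e j i) * (A $$ (i,m) * e k m))" by (rule sum.swap)
  also have "\<dots> = ip n (e j) (mv n A (e k))" unfolding ip_def mv_def by (simp add: sum_distrib_left)
  finally show ?thesis .
qed

lemma Tm_diag: "j < n \<Longrightarrow> k < n \<Longrightarrow> j \<noteq> k \<Longrightarrow> Tm $$ (j,k) = 0"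
  using Tm_entry e_T by simp

lemma Tm_real: assumes k: "k < n" shows "Tm $$ (k,k) = of_real (Re (Tm $$ (k,k)))"
proof -
  have "Tm $$ (k,k) = cnj (Tm $$ (k,k))" using Tm_entry[OF k k] herm_ip[OF herm A, of "e k" "e k"] by simp
  then have "Im (Tm $$ (k,k)) = Im (cnj (Tm $$ (k,k)))" by simp
  then have "Im (Tm $$ (k,k)) = 0" by simp
  then show ?thesis by (simp add: complex_eq_iff)
qed

lemma A_decomp: "A = Wm * Tm * Wa"
proof -
  have c1: "Wa * A \<in> carrier_mat n n" "Wa * A * Wm \<in> carrier_mat n n" "Wm * Wa \<in> carrier_mat n n"
    using Wm Wa A by (auto intro!: mult_carrier_mat)
  have "Wm * Tm * Wa = Wm * ((Wa * A * Wm) * Wa)" unfolding Tm_def by (rule assoc_mult_mat[OF Wm c1(2) Wa])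
  also have "(Wa * A * Wm) * Wa = (Wa * A) * (Wm * Wa)" by (rule assoc_mult_mat[OF c1(1) Wm Wa])
  also have "Wm * ((Wa * A) * (Wm * Wa)) = (Wm * (Wa * A)) * (Wm * Wa)" by (rule assoc_mult_mat[OF Wm c1(1) c1(3), symmetric])
  also have "Wm * (Wa * A) = (Wm * Wa) * A" by (rule assoc_mult_mat[OF Wm Wa A, symmetric])
  also have "(Wm * Wa) * A * (Wm * Wa) = A" using WWa A by simp
  finally show ?thesis by simp
qed

lemma A_entry: assumes i: "i < n" and j: "j < n"
  shows "A $$ (i,j) = (\<Sum>k<n. Wm $$ (i,k) * Tm $$ (k,k) * cnj (Wm $$ (j,k)))"
proof -
  have WT: "Wm * Tm \<in> carrier_mat n n" using Wm Tm by simp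
  have wt: "(Wm * Tm) $$ (i,l) = Wm $$ (i,l) * Tm $$ (l,l)" if l: "l < n" for l
  proof -
    have "(Wm * Tm) $$ (i,l) = (\<Sum>k<n. Wm $$ (i,k) * Tm $$ (k,l))" by (rule mult_entry[OF Wm Tm i l])
    also have "\<dots> = (\<Sum>k<n. if k = l then Wm $$ (i,k) * Tm $$ (k,l) else 0)"
      by (rule sum.cong) (use Tm_diag l in auto)
    also have "\<dots> = Wm $$ (i,l) * Tm $$ (l,l)" using l by (simp add: sum.delta)
    finally show ?thesis .
  qed
  have "A $$ (i,j) = (Wm * Tm * Wa) $$ (i,j)" using A_decomp by simp
  also have "\<dots> = (\<Sum>k<n. (Wm * Tm) $$ (i,k) * Wa $$ (k,j))" by (rule mult_entry[OF WT Wa i j])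
  also have "\<dots> = (\<Sum>k<n. Wm $$ (i,k) * Tm $$ (k,k) * cnj (Wm $$ (j,k)))"
    by (rule sum.cong) (use j wt in \<open>auto simp: Wa_def\<close>)
  finally show ?thesis .
qed

lemma eig_Tm: "eigvals_sorted A = sort (map (\<lambda>k. Re (Tm $$ (k,k))) [0..<n])"
proof -
  have "similar_mat_wit A Tm Wm Wa"
    unfolding similar_mat_wit_def Let_def using A Tm Wm Wa WWa WaW A_decomp by auto
  then have "char_poly A = char_poly Tm" by (intro char_poly_similar) (auto simp: similar_mat_def)
  also have "\<dots> = (\<Prod>a\<leftarrow>diag_mat Tm. [:- a, 1:])"
  proof (rule char_poly_upper_triangular[OF Tm])
    show "upper_triangular Tm" unfolding upper_triangular_def using Tm Tm_diag by auto
  qed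
  finally have "eigvals_sorted A = sort (map Re (diag_mat Tm))" by (rule eigvals_factored)
  also have "diag_mat Tm = map (\<lambda>k. Tm $$ (k,k)) [0..<n]" unfolding diag_mat_def using Tm by simp
  finally show ?thesis by (simp add: o_def)
qed

lemma unit_rows: "i < n \<Longrightarrow> j < n \<Longrightarrow> (\<Sum>k<n. Wm $$ (i,k) * cnj (Wm $$ (j,k))) = (if i = j then 1 else 0)"
proof -
  assume i: "i < n" and j: "j < n"
  have "(Wm * Wa) $$ (i,j) = (\<Sum>k<n. Wm $$ (i,k) * Wa $$ (k,j))" by (rule mult_entry[OF Wm Wa i j])
  also have "\<dots> = (\<Sum>k<n. Wm $$ (i,k) * cnj (Wm $$ (j,k)))"
    by (rule sum.cong) (use j in \<open>auto simp: Wa_def\<close>)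
  finally show ?thesis using WWa i j by simp
qed

lemma unit_cols: "i < n \<Longrightarrow> j < n \<Longrightarrow> (\<Sum>k<n. cnj (Wm $$ (k,i)) * Wm $$ (k,j)) = (if i = j then 1 else 0)"
proof -
  assume i: "i < n" and j: "j < n"
  have "(Wa * Wm) $$ (i,j) = (\<Sum>k<n. Wa $$ (i,k) * Wm $$ (k,j))" by (rule mult_entry[OF Wa Wm i j])
  also have "\<dots> = (\<Sum>k<n. cnj (Wm $$ (k,i)) * Wm $$ (k,j))"
    by (rule sum.cong) (use i in \<open>auto simp: Wa_def\<close>)
  finally show ?thesis using WaW i j by simp
qed

end

definition unitary_ent :: "nat \<Rightarrow> complex mat \<Rightarrow> bool" where
  "unitary_ent n W \<longleftrightarrow> W \<in> carrier_mat n n \<and>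
    (\<forall>i<n. \<forall>j<n. (\<Sum>k<n. W $$ (i,k) * cnj (W $$ (j,k))) = (if i = j then 1 else 0)) \<and>
    (\<forall>i<n. \<forall>j<n. (\<Sum>k<n. cnj (W $$ (k,i)) * W $$ (k,j)) = (if i = j then 1 else 0))"

lemma spectral_unsorted:
  assumes A: "A \<in> carrier_mat n n" and herm: "hermitian A"
  shows "\<exists>W d. unitary_ent n W \<and> eigvals_sorted A = sort (map d [0..<n]) \<and>
     (\<forall>i<n. \<forall>j<n. A $$ (i,j) = (\<Sum>k<n. W $$ (i,k) * of_real (d k) * cnj (W $$ (j,k))))"
proof -
  obtain es where cp: "char_poly A = (\<Prod>e\<leftarrow>es. [:-e,1:])" using char_poly_factorized[OF A] by auto
  obtain B P Q where sd: "schur_decomposition A es = (B,P,Q)" by (cases "schur_decomposition A es") auto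
  from schur_decomposition[OF A cp sd] have sw: "similar_mat_wit A B P Q" and ut: "upper_triangular B" by auto
  from sw A have P: "P \<in> carrier_mat n n" and Q: "Q \<in> carrier_mat n n" and B: "B \<in> carrier_mat n n"
    and QP: "Q * P = 1\<^sub>m n" and APBQ: "A = P * B * Q"
    unfolding similar_mat_wit_def Let_def by auto
  have PB: "P * B \<in> carrier_mat n n" using P B by simp
  have AP: "A * P = P * B"
  proof -
    have "A * P = (P * B) * (Q * P)" unfolding APBQ by (rule assoc_mult_mat[OF PB Q P])
    also have "\<dots> = P * B" using QP right_mult_one_mat[OF PB] by simp
    finally show ?thesis .
  qed
  have Pinv: "\<exists>Q\<in>carrier_mat n n. Q * P = 1\<^sub>m n" using Q QP by auto
  note prem = A P Pinv B AP ut herm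
  define W where "W = Wm n P"
  define d where "d k = Re (Tm n A P $$ (k,k))" for k
  have "unitary_ent n W" unfolding unitary_ent_def W_def
    using Wm[OF prem] unit_rows[OF prem] unit_cols[OF prem] by auto
  moreover have "eigvals_sorted A = sort (map d [0..<n])" unfolding d_def by (rule eig_Tm[OF prem])
  moreover have "\<forall>i<n. \<forall>j<n. A $$ (i,j) = (\<Sum>k<n. W $$ (i,k) * of_real (d k) * cnj (W $$ (j,k)))"
  proof (intro allI impI)
    fix i j assume i: "i < n" and j: "j < n"
    show "A $$ (i,j) = (\<Sum>k<n. W $$ (i,k) * of_real (d k) * cnj (W $$ (j,k)))"
      unfolding A_entry[OF prem i j] W_def d_def
      by (rule sum.cong[OF refl]) (use Tm_real[OF prem] in auto)
  qed
  ultimately show ?thesis by blast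
qed

theorem spectral:
  assumes A: "A \<in> carrier_mat n n" and herm: "hermitian A"
  shows "\<exists>W. unitary_ent n W \<and> length (eigvals_sorted A) = n \<and>
     (\<forall>i<n. \<forall>j<n. A $$ (i,j) = (\<Sum>k<n. W $$ (i,k) * of_real (eigvals_sorted A ! k) * cnj (W $$ (j,k))))"
proof -
  obtain W d where W: "unitary_ent n W" and ev: "eigvals_sorted A = sort (map d [0..<n])"
    and dec: "\<forall>i<n. \<forall>j<n. A $$ (i,j) = (\<Sum>k<n. W $$ (i,k) * of_real (d k) * cnj (W $$ (j,k)))"
    using spectral_unsorted[OF A herm] by blast
  let ?xs = "map d [0..<n]"
  have "mset (sort ?xs) = mset ?xs" by simp
  then obtain p where p: "p permutes {..<length ?xs}" and pl: "permute_list p ?xs = sort ?xs"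
    by (rule mset_eq_permutation)
  have p': "p permutes {..<n}" using p by simp
  have pn: "k < n \<Longrightarrow> p k < n" for k using permutes_in_image[OF p'] by auto
  have evk: "eigvals_sorted A ! k = d (p k)" if "k < n" for k
  proof -
    have "eigvals_sorted A ! k = permute_list p ?xs ! k" using ev pl by simp
    also have "\<dots> = ?xs ! p k" by (rule permute_list_nth) (use p that in auto)
    also have "\<dots> = d (p k)" using pn[OF that] by simp
    finally show ?thesis .
  qed
  define W' where "W' = mat n n (\<lambda>(i,k). W $$ (i, p k))"
  have W'e: "i < n \<Longrightarrow> k < n \<Longrightarrow> W' $$ (i,k) = W $$ (i, p k)" for i k unfolding W'_def by simp
  have reidx: "(\<Sum>k<n. f (p k)) = (\<Sum>k<n. f k)" for f :: "nat \<Rightarrow> complex"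
    using sum.permute[OF p', of f] by (simp add: o_def)
  have "unitary_ent n W'"
    unfolding unitary_ent_def
  proof (intro conjI allI impI)
    show "W' \<in> carrier_mat n n" unfolding W'_def by simp
  next
    fix i j assume i: "i < n" and j: "j < n"
    have "(\<Sum>k<n. W' $$ (i,k) * cnj (W' $$ (j,k))) = (\<Sum>k<n. W $$ (i,p k) * cnj (W $$ (j,p k)))"
      by (rule sum.cong) (use i j W'e in auto)
    also have "\<dots> = (\<Sum>k<n. W $$ (i,k) * cnj (W $$ (j,k)))" by (rule reidx)
    finally show "(\<Sum>k<n. W' $$ (i,k) * cnj (W' $$ (j,k))) = (if i = j then 1 else 0)"
      using W i j unfolding unitary_ent_def by simp
  next
    fix i j assume i: "i < n" and j: "j < n"
    have "(\<Sum>k<n. cnj (W' $$ (k,i)) * W' $$ (k,j)) = (\<Sum>k<n. cnj (W $$ (k,p i)) * W $$ (k,p j))"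
      by (rule sum.cong) (use i j W'e in auto)
    also have "\<dots> = (if p i = p j then 1 else 0)" using W pn[OF i] pn[OF j] unfolding unitary_ent_def by simp
    also have "(p i = p j) = (i = j)" using permutes_inj[OF p'] by (auto dest: injD)
    finally show "(\<Sum>k<n. cnj (W' $$ (k,i)) * W' $$ (k,j)) = (if i = j then 1 else 0)" .
  qed
  moreover have "length (eigvals_sorted A) = n" using ev by simp
  moreover have "\<forall>i<n. \<forall>j<n. A $$ (i,j) = (\<Sum>k<n. W' $$ (i,k) * of_real (eigvals_sorted A ! k) * cnj (W' $$ (j,k)))"
  proof (intro allI impI)
    fix i j assume i: "i < n" and j: "j < n"
    have "A $$ (i,j) = (\<Sum>k<n. W $$ (i,k) * of_real (d k) * cnj (W $$ (j,k)))" using dec i j by simp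
    also have "\<dots> = (\<Sum>k<n. W $$ (i,p k) * of_real (d (p k)) * cnj (W $$ (j,p k)))"
      by (rule reidx[symmetric])
    also have "\<dots> = (\<Sum>k<n. W' $$ (i,k) * of_real (eigvals_sorted A ! k) * cnj (W' $$ (j,k)))"
      by (rule sum.cong) (use i j W'e evk in auto)
    finally show "A $$ (i,j) = (\<Sum>k<n. W' $$ (i,k) * of_real (eigvals_sorted A ! k) * cnj (W' $$ (j,k)))" .
  qed
  ultimately show ?thesis by blast
qed

lemma sum_lessThan_add:
  fixes m b :: nat and f :: "nat \<Rightarrow> 'a::comm_monoid_add"
  shows "(\<Sum>k<m+b. f k) = (\<Sum>k<m. f k) + (\<Sum>y<b. f (m+y))"
  by (induct b) (simp_all add: add.assoc)

lemma sum_prod_split: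
  fixes a b :: nat and f :: "nat \<Rightarrow> 'a::comm_monoid_add"
  shows "(\<Sum>k<a*b. f k) = (\<Sum>x<a. \<Sum>y<b. f (x*b+y))"
proof (induct a)
  case (Suc a)
  have "(\<Sum>k<Suc a * b. f k) = (\<Sum>k<a*b + b. f k)" by (simp add: add.commute)
  also have "\<dots> = (\<Sum>k<a*b. f k) + (\<Sum>y<b. f (a*b+y))" by (rule sum_lessThan_add)
  finally show ?case using Suc by simp
qed simp

lemma divmod_aux:
  fixes x y b a :: nat
  assumes "y < b"
  shows "(x*b+y) div b = x" "(x*b+y) mod b = y"
  using assms by auto

lemma idx_aux:
  fixes x y b a :: nat
  assumes "x < a" "y < b"
  shows "x*b+y < a*b"
proof -
  have "x*b + y < x*b + b" using assms by simp
  also have "\<dots> = (Suc x) * b" by simp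
  also have "\<dots> \<le> a * b" using assms by (intro mult_right_mono) auto
  finally show ?thesis .
qed

lemma kron_dims[simp]: "dim_row (kron A B) = dim_row A * dim_row B" "dim_col (kron A B) = dim_col A * dim_col B"
  unfolding kron_def by simp_all

lemma kron_carrier:
  assumes "A \<in> carrier_mat a1 a2" "B \<in> carrier_mat b1 b2"
  shows "kron A B \<in> carrier_mat (a1*b1) (a2*b2)"
proof -
  have "dim_row A = a1" "dim_col A = a2" "dim_row B = b1" "dim_col B = b2" using assms by auto
  then show ?thesis by (intro carrier_matI) simp_all
qed

lemma kron_index: "i < dim_row A * dim_row B \<Longrightarrow> j < dim_col A * dim_col B \<Longrightarrow>
  kron A B $$ (i,j) = A $$ (i div dim_row B, j div dim_col B) * B $$ (i mod dim_row B, j mod dim_col B)"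
  unfolding kron_def by simp

lemma kron_index_split:
  assumes A: "A \<in> carrier_mat a1 a2" and B: "B \<in> carrier_mat b1 b2"
    and "x < a1" "y < b1" "u < a2" "v < b2"
  shows "kron A B $$ (x*b1+y, u*b2+v) = A $$ (x,u) * B $$ (y,v)"
proof -
  have "x*b1+y < a1*b1" "u*b2+v < a2*b2" using assms idx_aux by auto
  then show ?thesis using assms by (simp add: kron_index divmod_aux)
qed

lemma kron_mult:
  assumes A: "A \<in> carrier_mat a1 a2" and B: "B \<in> carrier_mat b1 b2"
    and C: "C \<in> carrier_mat a2 a3" and D: "D \<in> carrier_mat b2 b3"
  shows "kron A B * kron C D = kron (A * C) (B * D)"
proof (rule eq_matI)
  fix i j assume "i < dim_row (kron (A * C) (B * D))" "j < dim_col (kron (A * C) (B * D))"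
  then have i: "i < a1*b1" and j: "j < a3*b3" using A B C D by auto
  have b1: "b1 > 0" using i by (cases b1) auto
  have b3: "b3 > 0" using j by (cases b3) auto
  have ii: "i div b1 < a1" "i mod b1 < b1" using i b1 by (auto simp: less_mult_imp_div_less)
  have jj: "j div b3 < a3" "j mod b3 < b3" using j b3 by (auto simp: less_mult_imp_div_less)
  have KAB: "kron A B \<in> carrier_mat (a1*b1) (a2*b2)" by (rule kron_carrier[OF A B])
  have KCD: "kron C D \<in> carrier_mat (a2*b2) (a3*b3)" by (rule kron_carrier[OF C D])
  have "(kron A B * kron C D) $$ (i,j) = (\<Sum>k<a2*b2. kron A B $$ (i,k) * kron C D $$ (k,j))"
    by (rule mult_entry[OF KAB KCD i j])
  also have "\<dots> = (\<Sum>x<a2. \<Sum>y<b2. kron A B $$ (i,x*b2+y) * kron C D $$ (x*b2+y,j))"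
    by (rule sum_prod_split)
  also have "\<dots> = (\<Sum>x<a2. \<Sum>y<b2. (A $$ (i div b1, x) * C $$ (x, j div b3)) * (B $$ (i mod b1, y) * D $$ (y, j mod b3)))"
  proof (intro sum.cong refl)
    fix x y assume x: "x \<in> {..<a2}" and y: "y \<in> {..<b2}"
    have xy: "x*b2+y < a2*b2" using x y idx_aux by auto
    have "kron A B $$ (i,x*b2+y) = A $$ (i div b1, x) * B $$ (i mod b1, y)"
      using A B i xy y by (simp add: kron_index divmod_aux)
    moreover have "kron C D $$ (x*b2+y,j) = C $$ (x, j div b3) * D $$ (y, j mod b3)"
      using C D j xy y by (simp add: kron_index divmod_aux)
    ultimately show "kron A B $$ (i,x*b2+y) * kron C D $$ (x*b2+y,j) =
      (A $$ (i div b1, x) * C $$ (x, j div b3)) * (B $$ (i mod b1, y) * D $$ (y, j mod b3))"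
      by (simp add: mult_ac)
  qed
  also have "\<dots> = (\<Sum>x<a2. A $$ (i div b1, x) * C $$ (x, j div b3)) * (\<Sum>y<b2. B $$ (i mod b1, y) * D $$ (y, j mod b3))"
    by (rule sum_product[symmetric])
  also have "\<dots> = (A * C) $$ (i div b1, j div b3) * (B * D) $$ (i mod b1, j mod b3)"
    using mult_entry[OF A C ii(1) jj(1)] mult_entry[OF B D ii(2) jj(2)] by simp
  also have "\<dots> = kron (A * C) (B * D) $$ (i,j)"
    using A B C D i j by (simp add: kron_index)
  finally show "(kron A B * kron C D) $$ (i,j) = kron (A * C) (B * D) $$ (i,j)" .
qed (use A B C D in auto)

lemma kron_add_left:
  assumes A: "A \<in> carrier_mat a1 a2" and B: "B \<in> carrier_mat a1 a2"
  shows "kron (A + B) C = kron A C + kron B C"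
proof (rule eq_matI)
  fix i j assume "i < dim_row (kron A C + kron B C)" "j < dim_col (kron A C + kron B C)"
  then have i: "i < a1 * dim_row C" and j: "j < a2 * dim_col C" using A B by auto
  have ii: "i div dim_row C < a1" "j div dim_col C < a2" using i j by (auto simp: less_mult_imp_div_less)
  show "kron (A + B) C $$ (i,j) = (kron A C + kron B C) $$ (i,j)"
    using i j ii A B by (simp add: kron_index distrib_right)
qed (use A B in auto)

lemma kron_add_right:
  assumes A: "A \<in> carrier_mat a1 a2" and B: "B \<in> carrier_mat a1 a2"
  shows "kron C (A + B) = kron C A + kron C B"
proof (rule eq_matI)
  fix i j assume "i < dim_row (kron C A + kron C B)" "j < dim_col (kron C A + kron C B)"
  then have i: "i < dim_row C * a1" and j: "j < dim_col C * a2" using A B by auto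
  have a: "a1 > 0" "a2 > 0" using i j by (cases a1; cases a2; auto)+
  have ii: "i mod a1 < a1" "j mod a2 < a2" using a by auto
  show "kron C (A + B) $$ (i,j) = (kron C A + kron C B) $$ (i,j)"
    using i j ii A B by (simp add: kron_index distrib_left)
qed (use A B in auto)

lemma kron_smult_left: "kron (c \<cdot>\<^sub>m A) B = c \<cdot>\<^sub>m kron A B"
proof (rule eq_matI)
  fix i j assume "i < dim_row (c \<cdot>\<^sub>m kron A B)" "j < dim_col (c \<cdot>\<^sub>m kron A B)"
  then have i: "i < dim_row A * dim_row B" and j: "j < dim_col A * dim_col B" by auto
  have ii: "i div dim_row B < dim_row A" "j div dim_col B < dim_col A" using i j by (auto simp: less_mult_imp_div_less)
  show "kron (c \<cdot>\<^sub>m A) B $$ (i,j) = (c \<cdot>\<^sub>m kron A B) $$ (i,j)"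
    using i j ii by (simp add: kron_index mult.assoc)
qed auto

lemma kron_smult_right: "kron A (c \<cdot>\<^sub>m B) = c \<cdot>\<^sub>m kron A B"
proof (rule eq_matI)
  fix i j assume "i < dim_row (c \<cdot>\<^sub>m kron A B)" "j < dim_col (c \<cdot>\<^sub>m kron A B)"
  then have i: "i < dim_row A * dim_row B" and j: "j < dim_col A * dim_col B" by auto
  have a: "dim_row B > 0" "dim_col B > 0" using i j by (cases "dim_row B"; cases "dim_col B"; auto)+
  have ii: "i mod dim_row B < dim_row B" "j mod dim_col B < dim_col B" using a by auto
  show "kron A (c \<cdot>\<^sub>m B) $$ (i,j) = (c \<cdot>\<^sub>m kron A B) $$ (i,j)"
    using i j ii by (simp add: kron_index mult.left_commute)
qed auto

lemma kron_one: "kron (1\<^sub>m a) (1\<^sub>m b) = 1\<^sub>m (a*b)"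
proof (rule eq_matI)
  fix i j assume "i < dim_row (1\<^sub>m (a*b))" "j < dim_col (1\<^sub>m (a*b))"
  then have i: "i < a*b" and j: "j < a*b" by auto
  have b: "b > 0" using i by (cases b) auto
  have ii: "i div b < a" "j div b < a" "i mod b < b" "j mod b < b" using i j b by (auto simp: less_mult_imp_div_less)
  have e: "(i div b = j div b \<and> i mod b = j mod b) = (i = j)" by (metis div_mult_mod_eq)
  have "kron (1\<^sub>m a) (1\<^sub>m b) $$ (i,j) = (if i div b = j div b \<and> i mod b = j mod b then 1 else 0)"
    using i j ii by (simp add: kron_index)
  then show "kron (1\<^sub>m a) (1\<^sub>m b) $$ (i,j) = 1\<^sub>m (a*b) $$ (i,j)"
    using i j unfolding e by simp
qed auto

lemma less8: "(i::nat) < 8 \<Longrightarrow> i = 0 \<or> i = 1 \<or> i = 2 \<or> i = 3 \<or> i = 4 \<or> i = 5 \<or> i = 6 \<or> i = 7" by auto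
lemma less2: "(i::nat) < 2 \<Longrightarrow> i = 0 \<or> i = 1" by auto

lemma sig_dims[simp]:
  "dim_row sigma_x = 2" "dim_col sigma_x = 2" "dim_row sigma_y = 2" "dim_col sigma_y = 2"
  "dim_row sigma_z = 2" "dim_col sigma_z = 2" "dim_row I2 = 2" "dim_col I2 = 2"
  unfolding sigma_x_def sigma_y_def sigma_z_def I2_def by (auto simp: mat_of_rows_list_def)

lemma sig_carrier[simp]: "sigma_x \<in> carrier_mat 2 2" "sigma_y \<in> carrier_mat 2 2" "sigma_z \<in> carrier_mat 2 2" "I2 \<in> carrier_mat 2 2"
  by (intro carrier_matI; simp)+

lemma sz_idx: "i < 2 \<Longrightarrow> j < 2 \<Longrightarrow> sigma_z $$ (i,j) = (if i = j then (if i = 0 then 1 else -1) else 0)"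
  using less2[of i] less2[of j] by (auto simp: sigma_z_def mat_of_rows_list_def)
lemma I2_idx: "i < 2 \<Longrightarrow> j < 2 \<Longrightarrow> I2 $$ (i,j) = (if i = j then 1 else 0)"
  unfolding I2_def by simp
lemma sx_idx: "i < 2 \<Longrightarrow> j < 2 \<Longrightarrow> sigma_x $$ (i,j) = (if i = j then 0 else 1)"
  using less2[of i] less2[of j] by (auto simp: sigma_x_def mat_of_rows_list_def)
lemma sy_idx: "i < 2 \<Longrightarrow> j < 2 \<Longrightarrow> sigma_y $$ (i,j) = (if i = j then 0 else if i = 0 then - \<i> else \<i>)"
  using less2[of i] less2[of j] by (auto simp: sigma_y_def mat_of_rows_list_def)

definition dz :: "nat \<Rightarrow> complex" where "dz i = [3,1,1,-1,1,-1,-1,-3] ! i"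

lemma H0a_carrier: "H0_a E \<in> carrier_mat 8 8"
  unfolding H0_a_def on_qubit_def by (intro carrier_matI) simp_all

lemma H0a_entry: "i < 8 \<Longrightarrow> j < 8 \<Longrightarrow> H0_a E $$ (i,j) = (if i = j then of_real E * dz i else 0)"
  unfolding H0_a_def on_qubit_def
  apply (drule less8, drule less8)
  apply (elim disjE)
  apply (simp_all add: kron_index sz_idx I2_idx dz_def)
  done

lemma mat2_idx: "i < 2 \<Longrightarrow> j < 2 \<Longrightarrow> mat_of_rows_list 2 [[a,b],[c,d]] $$ (i,j) =
   (if i = 0 then (if j = 0 then a else b) else (if j = 0 then c else d))"
  using less2[of i] less2[of j] by (auto simp: mat_of_rows_list_def)

lemma mat2_dims[simp]: "dim_row (mat_of_rows_list 2 [[a,b],[c,d]]) = 2" "dim_col (mat_of_rows_list 2 [[a,b],[c,d]]) = 2"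
  by (simp_all add: mat_of_rows_list_def)

lemma mat2_carrier: "mat_of_rows_list 2 [[a,b],[c,d]] \<in> carrier_mat 2 2"
  by (intro carrier_matI) simp_all

lemma sum2: "(\<Sum>k<2. f k) = f 0 + f (1::nat)"
  by (simp add: numeral_2_eq_2)

definition "sq2 = complex_of_real (sqrt 2)"
definition "al = (1 + \<i>) / sq2"
definition "alc = (1 - \<i>) / sq2"

lemma sq2_sq: "sq2 * sq2 = 2" unfolding sq2_def by (simp flip: of_real_mult)
lemma sq2_nz: "sq2 \<noteq> 0" unfolding sq2_def by simp
lemma al_alc: "al * alc = 1"
proof -
  have "al * alc = ((1 + \<i>) * (1 - \<i>)) / (sq2 * sq2)" unfolding al_def alc_def by simp
  also have "(1 + \<i>) * (1 - \<i>) = 2" by (simp add: algebra_simps)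
  finally show ?thesis using sq2_sq by simp
qed
lemma alc_al: "alc * al = 1" using al_alc by (simp add: mult.commute)

definition "wm = mat_of_rows_list 2 [[1, 1], [al, - al]]"
definition "wi = mat_of_rows_list 2 [[1/2, alc/2], [1/2, - alc/2]]"
definition "Tq = mat_of_rows_list 2 [[0, alc], [al, 0]]"

lemma wm_c: "wm \<in> carrier_mat 2 2" unfolding wm_def by (rule mat2_carrier)
lemma wi_c: "wi \<in> carrier_mat 2 2" unfolding wi_def by (rule mat2_carrier)
lemma Tq_c: "Tq \<in> carrier_mat 2 2" unfolding Tq_def by (rule mat2_carrier)

lemma wm_wi: "wm * wi = 1\<^sub>m 2"
proof (rule eq_matI)
  fix i j assume "i < dim_row (1\<^sub>m 2)" "j < dim_col (1\<^sub>m 2)"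
  then have i: "i < 2" and j: "j < 2" by auto
  show "(wm * wi) $$ (i,j) = 1\<^sub>m 2 $$ (i,j)"
    unfolding mult_entry[OF wm_c wi_c i j] sum2 using less2[OF i] less2[OF j] al_alc
    by (auto simp: wm_def wi_def mat2_idx field_simps)
qed (auto simp: wm_def wi_def)

lemma wi_wm: "wi * wm = 1\<^sub>m 2"
  by (rule mat_mult_left_right_inverse[OF wm_c wi_c wm_wi])

lemma wm_sz: "wm * sigma_z = mat_of_rows_list 2 [[1, -1], [al, al]]"
proof (rule eq_matI)
  fix i j assume "i < dim_row (mat_of_rows_list 2 [[1, -1], [al, al]])" "j < dim_col (mat_of_rows_list 2 [[1, -1], [al, al]])"
  then have i: "i < 2" and j: "j < 2" by auto
  show "(wm * sigma_z) $$ (i,j) = mat_of_rows_list 2 [[1, -1], [al, al]] $$ (i,j)"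
    unfolding mult_entry[OF wm_c sig_carrier(3) i j] sum2 using less2[OF i] less2[OF j]
    by (auto simp: wm_def mat2_idx sz_idx)
qed (auto simp: wm_def)

lemma wm_sz_wi: "wm * sigma_z * wi = Tq"
proof (rule eq_matI)
  fix i j assume "i < dim_row Tq" "j < dim_col Tq"
  then have i: "i < 2" and j: "j < 2" by (auto simp: Tq_def)
  show "(wm * sigma_z * wi) $$ (i,j) = Tq $$ (i,j)"
    unfolding wm_sz mult_entry[OF mat2_carrier wi_c i j] sum2 using less2[OF i] less2[OF j]
    by (auto simp: wi_def Tq_def mat2_idx field_simps)
qed (auto simp: wm_def wi_def Tq_def)

lemma wm_I2_wi: "wm * I2 * wi = I2"
  using wm_wi wm_c by (simp add: I2_def)

lemma Tq_sig: "sq2 \<cdot>\<^sub>m Tq = sigma_x + sigma_y"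
proof (rule eq_matI)
  fix i j assume "i < dim_row (sigma_x + sigma_y)" "j < dim_col (sigma_x + sigma_y)"
  then have i: "i < 2" and j: "j < 2" by auto
  show "(sq2 \<cdot>\<^sub>m Tq) $$ (i,j) = (sigma_x + sigma_y) $$ (i,j)"
    using less2[OF i] less2[OF j] sq2_nz
    by (auto simp: Tq_def mat2_idx sx_idx sy_idx al_def alc_def)
qed (auto simp: Tq_def)

lemma kron_c4: "A \<in> carrier_mat 2 2 \<Longrightarrow> B \<in> carrier_mat 2 2 \<Longrightarrow> kron A B \<in> carrier_mat 4 4"
  using kron_carrier[of A 2 2 B 2 2] by simp
lemma kron_c8: "A \<in> carrier_mat 2 2 \<Longrightarrow> B \<in> carrier_mat 4 4 \<Longrightarrow> kron A B \<in> carrier_mat 8 8"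
  using kron_carrier[of A 2 2 B 4 4] by simp

lemma on_carrier: "M \<in> carrier_mat 2 2 \<Longrightarrow> on_qubit k M \<in> carrier_mat 8 8"
  unfolding on_qubit_def by (auto intro!: kron_c8 kron_c4)

lemma on_dims[simp]: "M \<in> carrier_mat 2 2 \<Longrightarrow> dim_row (on_qubit k M) = 8"
  "M \<in> carrier_mat 2 2 \<Longrightarrow> dim_col (on_qubit k M) = 8"
  using on_carrier[of M k] by auto

lemma kron3_conj:
  assumes X: "X \<in> carrier_mat 2 2" and Y: "Y \<in> carrier_mat 2 2" and Z: "Z \<in> carrier_mat 2 2"
  shows "kron wm (kron wm wm) * kron X (kron Y Z) * kron wi (kron wi wi) = kron (wm*X*wi) (kron (wm*Y*wi) (wm*Z*wi))"
proof -
  have "kron wm (kron wm wm) * kron X (kron Y Z) = kron (wm*X) (kron wm wm * kron Y Z)"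
    by (rule kron_mult[OF wm_c kron_c4[OF wm_c wm_c] X kron_c4[OF Y Z]])
  also have "kron wm wm * kron Y Z = kron (wm*Y) (wm*Z)" by (rule kron_mult[OF wm_c wm_c Y Z])
  finally have 1: "kron wm (kron wm wm) * kron X (kron Y Z) = kron (wm*X) (kron (wm*Y) (wm*Z))" .
  have c: "wm * X \<in> carrier_mat 2 2" "wm * Y \<in> carrier_mat 2 2" "wm * Z \<in> carrier_mat 2 2"
    using wm_c X Y Z by auto
  have "kron (wm*X) (kron (wm*Y) (wm*Z)) * kron wi (kron wi wi) = kron (wm*X*wi) (kron (wm*Y) (wm*Z) * kron wi wi)"
    by (rule kron_mult[OF c(1) kron_c4[OF c(2) c(3)] wi_c kron_c4[OF wi_c wi_c]])
  also have "kron (wm*Y) (wm*Z) * kron wi wi = kron (wm*Y*wi) (wm*Z*wi)" by (rule kron_mult[OF c(2) c(3) wi_c wi_c])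
  finally show ?thesis using 1 by simp
qed

lemma PQ_one: "kron wm (kron wm wm) * kron wi (kron wi wi) = 1\<^sub>m 8"
proof -
  have "kron wm (kron wm wm) * kron wi (kron wi wi) = kron (wm*wi) (kron wm wm * kron wi wi)"
    by (rule kron_mult[OF wm_c kron_c4[OF wm_c wm_c] wi_c kron_c4[OF wi_c wi_c]])
  also have "kron wm wm * kron wi wi = kron (wm*wi) (wm*wi)" by (rule kron_mult[OF wm_c wm_c wi_c wi_c])
  finally show ?thesis using kron_one[of 2 2] kron_one[of 2 4] by (simp add: wm_wi)
qed

lemma QP_one: "kron wi (kron wi wi) * kron wm (kron wm wm) = 1\<^sub>m 8"
proof -
  have "kron wi (kron wi wi) * kron wm (kron wm wm) = kron (wi*wm) (kron wi wi * kron wm wm)"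
    by (rule kron_mult[OF wi_c kron_c4[OF wi_c wi_c] wm_c kron_c4[OF wm_c wm_c]])
  also have "kron wi wi * kron wm wm = kron (wi*wm) (wi*wm)" by (rule kron_mult[OF wi_c wi_c wm_c wm_c])
  finally show ?thesis using kron_one[of 2 2] kron_one[of 2 4] by (simp add: wi_wm)
qed

lemma on_conj: "M \<in> carrier_mat 2 2 \<Longrightarrow>
  kron wm (kron wm wm) * on_qubit k M * kron wi (kron wi wi) = on_qubit k (wm * M * wi)"
  unfolding on_qubit_def by (simp add: kron3_conj wm_I2_wi)

lemma on_smult: "on_qubit k (a \<cdot>\<^sub>m M) = a \<cdot>\<^sub>m on_qubit k M"
  unfolding on_qubit_def by (simp add: kron_smult_left kron_smult_right)

lemma on_add: assumes M: "M \<in> carrier_mat 2 2" and N: "N \<in> carrier_mat 2 2"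
  shows "on_qubit k (M + N) = on_qubit k M + on_qubit k N"
proof -
  have "kron (M + N) (kron I2 I2) = kron M (kron I2 I2) + kron N (kron I2 I2)" by (rule kron_add_left[OF M N])
  moreover have "kron I2 (kron (M + N) I2) = kron I2 (kron M I2) + kron I2 (kron N I2)"
    using kron_add_left[OF M N, of I2] kron_add_right[OF kron_c4[OF M sig_carrier(4)] kron_c4[OF N sig_carrier(4)], of I2]
    by simp
  moreover have "kron I2 (kron I2 (M + N)) = kron I2 (kron I2 M) + kron I2 (kron I2 N)"
    using kron_add_right[OF M N, of I2] kron_add_right[OF kron_c4[OF sig_carrier(4) M] kron_c4[OF sig_carrier(4) N], of I2]
    by simp
  ultimately show ?thesis unfolding on_qubit_def by simp
qed

lemma smult_smult_m: "a \<cdot>\<^sub>m (b \<cdot>\<^sub>m A) = (a * b) \<cdot>\<^sub>m (A :: complex mat)"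
  by (rule eq_matI) auto

lemma sq2_Tq_on: "sq2 \<cdot>\<^sub>m on_qubit k Tq = on_qubit k sigma_x + on_qubit k sigma_y"
  using on_smult[of k sq2 Tq] Tq_sig on_add[OF sig_carrier(1) sig_carrier(2), of k] by simp

lemma ofr_c: "complex_of_real (sqrt 2 * E) = sq2 * of_real E"
  unfolding sq2_def by simp

lemma conj_add3:
  fixes P Q A B C :: "complex mat"
  assumes P: "P \<in> carrier_mat n n" and Q: "Q \<in> carrier_mat n n" and A: "A \<in> carrier_mat n n"
    and B: "B \<in> carrier_mat n n" and C: "C \<in> carrier_mat n n"
  shows "P * (A + B + C) * Q = P * A * Q + P * B * Q + P * C * Q"
proof -
  have AB: "A + B \<in> carrier_mat n n" using B by simp
  have "P * (A + B + C) = P * (A + B) + P * C" by (rule mult_add_distrib_mat[OF P AB C])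
  also have "P * (A + B) = P * A + P * B" by (rule mult_add_distrib_mat[OF P A B])
  finally have 1: "P * (A + B + C) = P * A + P * B + P * C" .
  have PA: "P * A \<in> carrier_mat n n" "P * B \<in> carrier_mat n n" "P * C \<in> carrier_mat n n" using P A B C by auto
  have PAB: "P * A + P * B \<in> carrier_mat n n" using PA by simp
  have "(P * A + P * B + P * C) * Q = (P * A + P * B) * Q + P * C * Q" by (rule add_mult_distrib_mat[OF PAB PA(3) Q])
  also have "(P * A + P * B) * Q = P * A * Q + P * B * Q" by (rule add_mult_distrib_mat[OF PA(1) PA(2) Q])
  finally show ?thesis unfolding 1 .
qed

lemma H0b_sim: "H0_b E = kron wm (kron wm wm) * H0_a (sqrt 2 * E) * kron wi (kron wi wi)"
proof -
  let ?P = "kron wm (kron wm wm)" and ?Q = "kron wi (kron wi wi)"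
  let ?c = "complex_of_real (sqrt 2 * E)"
  have P: "?P \<in> carrier_mat 8 8" by (rule kron_c8[OF wm_c kron_c4[OF wm_c wm_c]])
  have Q: "?Q \<in> carrier_mat 8 8" by (rule kron_c8[OF wi_c kron_c4[OF wi_c wi_c]])
  have O: "on_qubit k sigma_z \<in> carrier_mat 8 8" for k by (rule on_carrier) simp
  have S: "on_qubit 1 sigma_z + on_qubit 2 sigma_z + on_qubit 3 sigma_z \<in> carrier_mat 8 8" using O by simp
  have PS: "?P * (on_qubit 1 sigma_z + on_qubit 2 sigma_z + on_qubit 3 sigma_z) \<in> carrier_mat 8 8" using P S by simp
  have e1: "?P * (?c \<cdot>\<^sub>m (on_qubit 1 sigma_z + on_qubit 2 sigma_z + on_qubit 3 sigma_z)) =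
      ?c \<cdot>\<^sub>m (?P * (on_qubit 1 sigma_z + on_qubit 2 sigma_z + on_qubit 3 sigma_z))"
    by (rule mult_smult_distrib[OF P S])
  have e2: "(?c \<cdot>\<^sub>m (?P * (on_qubit 1 sigma_z + on_qubit 2 sigma_z + on_qubit 3 sigma_z))) * ?Q =
      ?c \<cdot>\<^sub>m (?P * (on_qubit 1 sigma_z + on_qubit 2 sigma_z + on_qubit 3 sigma_z) * ?Q)"
    by (rule mult_smult_assoc_mat[OF PS Q])
  have "?P * H0_a (sqrt 2 * E) * ?Q = ?c \<cdot>\<^sub>m (?P * (on_qubit 1 sigma_z + on_qubit 2 sigma_z + on_qubit 3 sigma_z) * ?Q)"
    unfolding H0_a_def e1 e2 by (rule refl)
  also have "?P * (on_qubit 1 sigma_z + on_qubit 2 sigma_z + on_qubit 3 sigma_z) * ?Q =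
     ?P * on_qubit 1 sigma_z * ?Q + ?P * on_qubit 2 sigma_z * ?Q + ?P * on_qubit 3 sigma_z * ?Q"
    by (rule conj_add3[OF P Q O O O])
  also have "\<dots> = on_qubit 1 Tq + on_qubit 2 Tq + on_qubit 3 Tq"
    by (simp add: on_conj wm_sz_wi)
  finally have L: "?P * H0_a (sqrt 2 * E) * ?Q = ?c \<cdot>\<^sub>m (on_qubit 1 Tq + on_qubit 2 Tq + on_qubit 3 Tq)" .
  have T: "on_qubit k Tq \<in> carrier_mat 8 8" for k by (rule on_carrier[OF Tq_c])
  have X: "on_qubit k sigma_x \<in> carrier_mat 8 8" "on_qubit k sigma_y \<in> carrier_mat 8 8" for k by (rule on_carrier, simp)+
  have ent: "sq2 * on_qubit k Tq $$ (i,j) = on_qubit k sigma_x $$ (i,j) + on_qubit k sigma_y $$ (i,j)"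
    if "i < 8" "j < 8" for k i j
  proof -
    have "(sq2 \<cdot>\<^sub>m on_qubit k Tq) $$ (i,j) = (on_qubit k sigma_x + on_qubit k sigma_y) $$ (i,j)"
      by (simp add: sq2_Tq_on)
    then show ?thesis using that T[of k] X[of k] by simp
  qed
  have "H0_b E = ?c \<cdot>\<^sub>m (on_qubit 1 Tq + on_qubit 2 Tq + on_qubit 3 Tq)"
  proof (rule eq_matI)
    fix i j assume "i < dim_row (?c \<cdot>\<^sub>m (on_qubit 1 Tq + on_qubit 2 Tq + on_qubit 3 Tq))"
      "j < dim_col (?c \<cdot>\<^sub>m (on_qubit 1 Tq + on_qubit 2 Tq + on_qubit 3 Tq))"
    moreover have "dim_row (on_qubit 3 Tq) = 8" "dim_col (on_qubit 3 Tq) = 8" using T[of 3] by auto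
    ultimately have i: "i < 8" and j: "j < 8" by auto
    have "H0_b E $$ (i,j) = of_real E * ((on_qubit 1 sigma_x $$ (i,j) + on_qubit 1 sigma_y $$ (i,j))
       + (on_qubit 2 sigma_x $$ (i,j) + on_qubit 2 sigma_y $$ (i,j)) + (on_qubit 3 sigma_x $$ (i,j) + on_qubit 3 sigma_y $$ (i,j)))"
      unfolding H0_b_def using i j X by simp
    also have "\<dots> = of_real E * (sq2 * on_qubit 1 Tq $$ (i,j) + sq2 * on_qubit 2 Tq $$ (i,j) + sq2 * on_qubit 3 Tq $$ (i,j))"
      using ent[OF i j] by simp
    also have "\<dots> = (?c \<cdot>\<^sub>m (on_qubit 1 Tq + on_qubit 2 Tq + on_qubit 3 Tq)) $$ (i,j)"
      using i j T Tq_c by (simp add: sq2_def algebra_simps)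
    finally show "H0_b E $$ (i,j) = (?c \<cdot>\<^sub>m (on_qubit 1 Tq + on_qubit 2 Tq + on_qubit 3 Tq)) $$ (i,j)" .
  qed (use T X in \<open>auto simp: H0_b_def\<close>)
  then show ?thesis using L by simp
qed

lemma hb_sim: "h_b E = wm * h_a (sqrt 2 * E) * wi"
proof -
  have "wm * h_a (sqrt 2 * E) * wi = complex_of_real (sqrt 2 * E) \<cdot>\<^sub>m (wm * sigma_z * wi)"
    unfolding h_a_def using wm_c wi_c
    by (simp add: mult_smult_distrib[OF wm_c sig_carrier(3)] mult_smult_assoc_mat[of _ 2 2 _ 2])
  also have "\<dots> = of_real E \<cdot>\<^sub>m (sq2 \<cdot>\<^sub>m Tq)" unfolding wm_sz_wi ofr_c smult_smult_m by (simp add: mult.commute)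
  also have "\<dots> = h_b E" unfolding Tq_sig h_b_def ..
  finally show ?thesis by simp
qed

lemma eig_sim: "similar_mat A B \<Longrightarrow> eigvals_sorted A = eigvals_sorted B"
  unfolding eigvals_sorted_def using char_poly_similar by metis

lemma H0b_carrier: "H0_b E \<in> carrier_mat 8 8"
  unfolding H0_b_def on_qubit_def by (intro carrier_matI) simp_all

lemma eig_H0b: "eigvals_sorted (H0_b E) = eigvals_sorted (H0_a (sqrt 2 * E))"
proof (rule eig_sim)
  have n: "dim_row (H0_b E) = 8" using H0b_carrier by auto
  have c: "{H0_b E, H0_a (sqrt 2 * E), kron wm (kron wm wm), kron wi (kron wi wi)} \<subseteq> carrier_mat 8 8"
    using H0b_carrier H0a_carrier kron_c8[OF wm_c kron_c4[OF wm_c wm_c]] kron_c8[OF wi_c kron_c4[OF wi_c wi_c]]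
    by blast
  have "similar_mat_wit (H0_b E) (H0_a (sqrt 2 * E)) (kron wm (kron wm wm)) (kron wi (kron wi wi))"
    unfolding similar_mat_wit_def Let_def n using c PQ_one QP_one H0b_sim[of E] by blast
  then show "similar_mat (H0_b E) (H0_a (sqrt 2 * E))" unfolding similar_mat_def by blast
qed

lemma hb_carrier: "h_b E \<in> carrier_mat 2 2" unfolding h_b_def by simp
lemma ha_carrier: "h_a E \<in> carrier_mat 2 2" unfolding h_a_def by simp

lemma eig_hb: "eigvals_sorted (h_b E) = eigvals_sorted (h_a (sqrt 2 * E))"
proof (rule eig_sim)
  have n: "dim_row (h_b E) = 2" using hb_carrier by auto
  have c: "{h_b E, h_a (sqrt 2 * E), wm, wi} \<subseteq> carrier_mat 2 2"
    using hb_carrier ha_carrier wm_c wi_c by blast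
  have "similar_mat_wit (h_b E) (h_a (sqrt 2 * E)) wm wi"
    unfolding similar_mat_wit_def Let_def n using c wm_wi wi_wm hb_sim[of E] by blast
  then show "similar_mat (h_b E) (h_a (sqrt 2 * E))" unfolding similar_mat_def by blast
qed

lemma sort8:
  assumes E: "(E::real) > 0"
  shows "sort [3*E, E, E, -E, E, -E, -E, -3*E] = [-3*E, -E, -E, -E, E, E, E, 3*E]"
proof (rule properties_for_sort)
  show "sorted [-3*E, -E, -E, -E, E, E, E, 3*E]" using E by simp
  show "mset [-3*E, -E, -E, -E, E, E, E, 3*E] = mset [3*E, E, E, -E, E, -E, -E, -3*E]"
    by (simp add: add_mset_commute)
qed

lemma eig_H0a: assumes E: "E > 0" shows "eigvals_sorted (H0_a E) = [-3*E, -E, -E, -E, E, E, E, 3*E]"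
proof -
  have ut: "upper_triangular (H0_a E)"
    unfolding upper_triangular_def using H0a_entry[of _ _ E] H0a_carrier[of E] by auto
  have "char_poly (H0_a E) = (\<Prod>a\<leftarrow>diag_mat (H0_a E). [:- a, 1:])"
    by (rule char_poly_upper_triangular[OF H0a_carrier ut])
  then have "eigvals_sorted (H0_a E) = sort (map Re (diag_mat (H0_a E)))" by (rule eigvals_factored)
  also have "diag_mat (H0_a E) = map (\<lambda>i. of_real E * dz i) [0..<8]"
    unfolding diag_mat_def using H0a_carrier[of E] H0a_entry[of _ _ E] by auto
  also have "map Re (map (\<lambda>i. of_real E * dz i) [0..<8]) = [3*E, E, E, -E, E, -E, -E, -3*E]"
    by (simp add: dz_def upt_rec)
  finally show ?thesis using sort8[OF E] by simp
qed

lemma ha_entry: "i < 2 \<Longrightarrow> j < 2 \<Longrightarrow> h_a E $$ (i,j) = (if i = j then (if i = 0 then of_real E else - of_real E) else 0)"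
  unfolding h_a_def by (simp add: sz_idx)

lemma eig_ha: assumes E: "E > 0" shows "eigvals_sorted (h_a E) = [-E, E]"
proof -
  have ut: "upper_triangular (h_a E)"
    unfolding upper_triangular_def using ha_entry[of _ _ E] ha_carrier[of E] by auto
  have "char_poly (h_a E) = (\<Prod>a\<leftarrow>diag_mat (h_a E). [:- a, 1:])"
    by (rule char_poly_upper_triangular[OF ha_carrier ut])
  then have "eigvals_sorted (h_a E) = sort (map Re (diag_mat (h_a E)))" by (rule eigvals_factored)
  also have "diag_mat (h_a E) = [of_real E, - of_real E]"
    unfolding diag_mat_def using ha_carrier[of E] ha_entry[of _ _ E] by (auto simp: upt_rec)
  finally show ?thesis using E by simp
qed

definition nsq :: "complex \<Rightarrow> complex" where "nsq z = z * cnj z"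

lemma nsq_real: "nsq z = of_real ((cmod z)^2)"
  unfolding nsq_def complex_norm_square ..

lemma nsq_mult: "nsq (x * y) = nsq x * nsq y"
  unfolding nsq_def by (simp add: mult_ac)

lemma nsq_cnj: "nsq (cnj x) = nsq x"
  unfolding nsq_def by (simp add: mult.commute)

lemma sum2': "(\<Sum>k<2. f k) = f 0 + f (1::nat)"
  by (simp add: numeral_2_eq_2)

lemma sum8: fixes f :: "nat \<Rightarrow> 'a::comm_monoid_add" shows "(\<Sum>x<8. f x) = (\<Sum>a<2. \<Sum>b<2. \<Sum>c<2. f (4*a+2*b+c))"
  by (simp add: sum2' eval_nat_numeral add.assoc)

lemma swap3: "(\<Sum>a\<in>A. \<Sum>b\<in>B. \<Sum>j\<in>J. f a b j) = (\<Sum>j\<in>J. \<Sum>a\<in>A. \<Sum>b\<in>B. f a b j)"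
proof -
  have "(\<Sum>a\<in>A. \<Sum>b\<in>B. \<Sum>j\<in>J. f a b j) = (\<Sum>a\<in>A. \<Sum>j\<in>J. \<Sum>b\<in>B. f a b j)"
    by (rule sum.cong[OF refl], rule sum.swap)
  also have "\<dots> = (\<Sum>j\<in>J. \<Sum>a\<in>A. \<Sum>b\<in>B. f a b j)" by (rule sum.swap)
  finally show ?thesis .
qed

lemma PARS:
  fixes w :: "nat \<Rightarrow> nat \<Rightarrow> complex"
  assumes orth: "\<And>x y. x < n \<Longrightarrow> y < n \<Longrightarrow> (\<Sum>j<m. w x j * cnj (w y j)) = (if x = y then 1 else 0)"
  shows "(\<Sum>j<m. nsq (\<Sum>x<n. c x * w x j)) = (\<Sum>x<n. nsq (c x))"
proof -
  have "(\<Sum>j<m. nsq (\<Sum>x<n. c x * w x j)) = (\<Sum>j<m. \<Sum>x<n. \<Sum>y<n. (c x * w x j) * (cnj (c y) * cnj (w y j)))"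
    unfolding nsq_def cnj_sum complex_cnj_mult sum_product ..
  also have "\<dots> = (\<Sum>j<m. \<Sum>x<n. \<Sum>y<n. c x * cnj (c y) * (w x j * cnj (w y j)))"
    by (intro sum.cong refl) (simp add: mult_ac)
  also have "\<dots> = (\<Sum>x<n. \<Sum>y<n. \<Sum>j<m. c x * cnj (c y) * (w x j * cnj (w y j)))"
    by (rule swap3[symmetric])
  also have "\<dots> = (\<Sum>x<n. \<Sum>y<n. c x * cnj (c y) * (if x = y then 1 else 0))"
    by (intro sum.cong refl) (simp add: sum_distrib_left[symmetric] orth)
  also have "\<dots> = (\<Sum>x<n. nsq (c x))"
    by (rule sum.cong[OF refl]) (simp add: nsq_def if_distrib sum.delta cong: if_cong)
  finally show ?thesis .
qed

lemma PARS_U: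
  assumes U: "unitary_ent n U"
  shows "(\<Sum>s<n. nsq (\<Sum>a<n. cnj (U $$ (a,s)) * x a)) = (\<Sum>a<n. nsq (x a))"
proof -
  have "(\<Sum>s<n. nsq (\<Sum>a<n. x a * cnj (U $$ (a,s)))) = (\<Sum>a<n. nsq (x a))"
  proof (rule PARS)
    fix a b assume a: "a < n" and b: "b < n"
    have "(\<Sum>s<n. cnj (U $$ (a,s)) * cnj (cnj (U $$ (b,s)))) = cnj (\<Sum>s<n. U $$ (a,s) * cnj (U $$ (b,s)))"
      by (simp add: cnj_sum)
    also have "\<dots> = (if a = b then 1 else 0)" using U a b unfolding unitary_ent_def by simp
    finally show "(\<Sum>s<n. cnj (U $$ (a,s)) * cnj (cnj (U $$ (b,s)))) = (if a = b then 1 else 0)" .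
  qed
  then show ?thesis by (simp add: mult.commute)
qed

lemma mu_decomp:
  assumes U: "unitary_ent n U" and s: "s < n"
    and dec: "\<And>a a'. a < n \<Longrightarrow> a' < n \<Longrightarrow> M a a' = (\<Sum>r<n. U $$ (a,r) * of_real (mu r) * cnj (U $$ (a',r)))"
  shows "(\<Sum>a<n. \<Sum>a'<n. cnj (U $$ (a,s)) * M a a' * U $$ (a',s)) = of_real (mu s)"
proof -
  have cols: "\<And>i j. i < n \<Longrightarrow> j < n \<Longrightarrow> (\<Sum>k<n. cnj (U $$ (k,i)) * U $$ (k,j)) = (if i = j then 1 else 0)"
    using U unfolding unitary_ent_def by auto
  have "(\<Sum>a<n. \<Sum>a'<n. cnj (U $$ (a,s)) * M a a' * U $$ (a',s)) =
        (\<Sum>a<n. \<Sum>a'<n. \<Sum>r<n. of_real (mu r) * (cnj (U $$ (a,s)) * U $$ (a,r)) * (cnj (U $$ (a',r)) * U $$ (a',s)))"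
  proof (intro sum.cong refl)
    fix a a' assume "a \<in> {..<n}" "a' \<in> {..<n}"
    then have "M a a' = (\<Sum>r<n. U $$ (a,r) * of_real (mu r) * cnj (U $$ (a',r)))" using dec by auto
    then show "cnj (U $$ (a,s)) * M a a' * U $$ (a',s) =
      (\<Sum>r<n. of_real (mu r) * (cnj (U $$ (a,s)) * U $$ (a,r)) * (cnj (U $$ (a',r)) * U $$ (a',s)))"
      by (simp add: sum_distrib_left sum_distrib_right mult_ac)
  qed
  also have "\<dots> = (\<Sum>r<n. \<Sum>a<n. \<Sum>a'<n. of_real (mu r) * (cnj (U $$ (a,s)) * U $$ (a,r)) * (cnj (U $$ (a',r)) * U $$ (a',s)))"
    by (rule swap3)
  also have "\<dots> = (\<Sum>r<n. of_real (mu r) * ((\<Sum>a<n. cnj (U $$ (a,s)) * U $$ (a,r)) * (\<Sum>a'<n. cnj (U $$ (a',r)) * U $$ (a',s))))"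
    unfolding sum_product by (simp only: sum_distrib_left mult.assoc)
  also have "\<dots> = (\<Sum>r<n. if r = s then of_real (mu r) else 0)"
    by (rule sum.cong[OF refl]) (simp add: cols s)
  also have "\<dots> = of_real (mu s)" using s by (simp add: sum.delta)
  finally show ?thesis .
qed

lemma Lpart:
  assumes U2: "unitary_ent 2 U2" and U3: "unitary_ent 2 U3"
  shows "(\<Sum>t2<2. \<Sum>t3<2. nsq (\<Sum>a<2. \<Sum>b<2. \<Sum>c<2. cnj (U1$$(a,s1)) * cnj (U2$$(b,t2)) * cnj (U3$$(c,t3)) * F a b c))
       = (\<Sum>b<2. \<Sum>c<2. nsq (\<Sum>a<2. cnj (U1$$(a,s1)) * F a b c))"
proof -
  define y where "y b c = (\<Sum>a<2. cnj (U1$$(a,s1)) * F a b c)" for b c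
  define Z where "Z t3 b = (\<Sum>c<2. cnj (U3$$(c,t3)) * y b c)" for t3 b
  have re: "(\<Sum>a<2. \<Sum>b<2. \<Sum>c<2. cnj (U1$$(a,s1)) * cnj (U2$$(b,t2)) * cnj (U3$$(c,t3)) * F a b c)
      = (\<Sum>b<2. cnj (U2$$(b,t2)) * Z t3 b)" for t2 t3
    by (simp add: sum2' y_def Z_def algebra_simps)
  have "(\<Sum>t2<2. \<Sum>t3<2. nsq (\<Sum>a<2. \<Sum>b<2. \<Sum>c<2. cnj (U1$$(a,s1)) * cnj (U2$$(b,t2)) * cnj (U3$$(c,t3)) * F a b c))
      = (\<Sum>t2<2. \<Sum>t3<2. nsq (\<Sum>b<2. cnj (U2$$(b,t2)) * Z t3 b))" by (simp only: re)
  also have "\<dots> = (\<Sum>t3<2. \<Sum>t2<2. nsq (\<Sum>b<2. cnj (U2$$(b,t2)) * Z t3 b))" by (rule sum.swap)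
  also have "\<dots> = (\<Sum>t3<2. \<Sum>b<2. nsq (Z t3 b))" by (simp only: PARS_U[OF U2])
  also have "\<dots> = (\<Sum>b<2. \<Sum>t3<2. nsq (\<Sum>c<2. cnj (U3$$(c,t3)) * y b c))" unfolding Z_def by (rule sum.swap)
  also have "\<dots> = (\<Sum>b<2. \<Sum>c<2. nsq (y b c))" by (simp only: PARS_U[OF U3])
  finally show ?thesis unfolding y_def .
qed

lemma F1gen:
  fixes idx :: "nat \<Rightarrow> nat \<Rightarrow> nat \<Rightarrow> nat" and rho Wf :: "nat \<Rightarrow> nat \<Rightarrow> complex"
    and R :: "nat \<Rightarrow> nat \<Rightarrow> complex" and lam mu :: "nat \<Rightarrow> real"
  assumes U: "unitary_ent 2 U" and s: "s < 2"
    and decU: "\<And>a a'. a < 2 \<Longrightarrow> a' < 2 \<Longrightarrow> R a a' = (\<Sum>r<2. U $$ (a,r) * of_real (mu r) * cnj (U $$ (a',r)))"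
    and Rdef: "\<And>a a'. a < 2 \<Longrightarrow> a' < 2 \<Longrightarrow> R a a' = (\<Sum>u<2. \<Sum>v<2. rho (idx a u v) (idx a' u v))"
    and rhodec: "\<And>x y. x < 8 \<Longrightarrow> y < 8 \<Longrightarrow> rho x y = (\<Sum>j<8. Wf x j * of_real (lam j) * cnj (Wf y j))"
    and idx: "\<And>a u v. a < 2 \<Longrightarrow> u < 2 \<Longrightarrow> v < 2 \<Longrightarrow> idx a u v < 8"
  shows "of_real (mu s) = (\<Sum>j<8. of_real (lam j) * (\<Sum>u<2. \<Sum>v<2. nsq (\<Sum>a<2. cnj (U$$(a,s)) * Wf (idx a u v) j)))"
proof -
  have A: "R a a' = (\<Sum>j<8. \<Sum>u<2. \<Sum>v<2. Wf (idx a u v) j * of_real (lam j) * cnj (Wf (idx a' u v) j))"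
    if a: "a < 2" "a' < 2" for a a'
  proof -
    have "R a a' = (\<Sum>u<2. \<Sum>v<2. \<Sum>j<8. Wf (idx a u v) j * of_real (lam j) * cnj (Wf (idx a' u v) j))"
      using a by (simp add: Rdef rhodec idx)
    also have "\<dots> = (\<Sum>j<8. \<Sum>u<2. \<Sum>v<2. Wf (idx a u v) j * of_real (lam j) * cnj (Wf (idx a' u v) j))"
      by (rule swap3)
    finally show ?thesis .
  qed
  have "of_real (mu s) = (\<Sum>a<2. \<Sum>a'<2. cnj (U $$ (a,s)) * R a a' * U $$ (a',s))"
    by (rule mu_decomp[OF U s decU, symmetric])
  also have "\<dots> = (\<Sum>a<2. \<Sum>a'<2. \<Sum>j<8. cnj (U $$ (a,s)) * (\<Sum>u<2. \<Sum>v<2. Wf (idx a u v) j * of_real (lam j) * cnj (Wf (idx a' u v) j)) * U $$ (a',s))"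
    by (intro sum.cong refl) (simp add: A sum_distrib_left sum_distrib_right)
  also have "\<dots> = (\<Sum>j<8. \<Sum>a<2. \<Sum>a'<2. cnj (U $$ (a,s)) * (\<Sum>u<2. \<Sum>v<2. Wf (idx a u v) j * of_real (lam j) * cnj (Wf (idx a' u v) j)) * U $$ (a',s))"
    by (rule swap3)
  also have "\<dots> = (\<Sum>j<8. of_real (lam j) * (\<Sum>u<2. \<Sum>v<2. nsq (\<Sum>a<2. cnj (U$$(a,s)) * Wf (idx a u v) j)))"
    by (rule sum.cong[OF refl]) (simp add: sum2' nsq_def algebra_simps)
  finally show ?thesis .
qed

lemma colsum:
  assumes UA: "unitary_ent 2 UA" and W: "unitary_ent 8 W" and j: "j < 8"
  shows "(\<Sum>s<2. \<Sum>b<2. \<Sum>c<2. nsq (\<Sum>a<2. cnj (UA$$(a,s)) * W $$ (4*a+2*b+c, j))) = 1"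
proof -
  have "(\<Sum>s<2. \<Sum>b<2. \<Sum>c<2. nsq (\<Sum>a<2. cnj (UA$$(a,s)) * W $$ (4*a+2*b+c, j)))
      = (\<Sum>b<2. \<Sum>c<2. \<Sum>s<2. nsq (\<Sum>a<2. cnj (UA$$(a,s)) * W $$ (4*a+2*b+c, j)))"
    by (rule swap3[symmetric])
  also have "\<dots> = (\<Sum>b<2. \<Sum>c<2. \<Sum>a<2. nsq (W $$ (4*a+2*b+c, j)))" by (simp only: PARS_U[OF UA])
  also have "\<dots> = (\<Sum>x<8. nsq (W $$ (x, j)))" by (simp add: sum8 sum2' algebra_simps)
  also have "\<dots> = (\<Sum>x<8. cnj (W $$ (x,j)) * W $$ (x,j))" by (simp add: nsq_def mult.commute)
  also have "\<dots> = 1" using W j unfolding unitary_ent_def by simp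
  finally show ?thesis .
qed

lemma rowsum:
  assumes UA: "unitary_ent 2 UA" and UB: "unitary_ent 2 UB" and UC: "unitary_ent 2 UC"
    and W: "unitary_ent 8 W" and s: "s1 < 2" "s2 < 2" "s3 < 2"
  shows "(\<Sum>j<8. nsq (\<Sum>a<2. \<Sum>b<2. \<Sum>c<2. cnj (UA$$(a,s1)) * cnj (UB$$(b,s2)) * cnj (UC$$(c,s3)) * W $$ (4*a+2*b+c, j))) = 1"
proof -
  define cc where "cc x = cnj (UA$$(x div 4,s1)) * cnj (UB$$(x div 2 mod 2,s2)) * cnj (UC$$(x mod 2,s3))" for x
  have M: "(\<Sum>a<2. \<Sum>b<2. \<Sum>c<2. cnj (UA$$(a,s1)) * cnj (UB$$(b,s2)) * cnj (UC$$(c,s3)) * W $$ (4*a+2*b+c, j))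
     = (\<Sum>x<8. cc x * W $$ (x,j))" for j
    by (simp add: sum8 sum2' cc_def)
  have "(\<Sum>j<8. nsq (\<Sum>x<8. cc x * W $$ (x,j))) = (\<Sum>x<8. nsq (cc x))"
  proof (rule PARS)
    fix x y :: nat assume "x < 8" "y < 8"
    then show "(\<Sum>j<8. W $$ (x,j) * cnj (W $$ (y,j))) = (if x = y then 1 else 0)"
      using W unfolding unitary_ent_def by simp
  qed
  also have "\<dots> = (\<Sum>a<2. nsq (UA$$(a,s1))) * (\<Sum>b<2. nsq (UB$$(b,s2))) * (\<Sum>c<2. nsq (UC$$(c,s3)))"
    by (simp add: sum8 sum2' cc_def nsq_mult nsq_cnj algebra_simps)
  finally have X: "(\<Sum>j<8. nsq (\<Sum>x<8. cc x * W $$ (x,j))) = (\<Sum>a<2. nsq (UA$$(a,s1))) * (\<Sum>b<2. nsq (UB$$(b,s2))) * (\<Sum>c<2. nsq (UC$$(c,s3)))" .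
  have "(\<Sum>a<2. nsq (UA$$(a,s1))) = 1" "(\<Sum>b<2. nsq (UB$$(b,s2))) = 1" "(\<Sum>c<2. nsq (UC$$(c,s3))) = 1"
    using UA UB UC s unfolding unitary_ent_def nsq_def by (simp_all add: mult.commute)
  then show ?thesis using X by (simp add: M)
qed

lemma FIN_core:
  fixes l0 l1 l2 l3 l4 l5 l6 l7 k0 k1 k2 k3 k4 k5 k6 k7 :: real
  assumes "l0 \<le> l1" "l1 \<le> l2" "l2 \<le> l3" "l3 \<le> l4" "l4 \<le> l5" "l5 \<le> l6" "l6 \<le> l7"
    and "k0+k1+k2+k3+k4+k5+k6+k7 = 0"
    and "k1+k2+k3+k4+k5+k6+k7 \<le> 3"
    and "k2+k3+k4+k5+k6+k7 \<le> 4"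
    and "k3+k4+k5+k6+k7 \<le> 5"
    and "k4+k5+k6+k7 \<le> 6"
    and "k5+k6+k7 \<le> 5"
    and "k6+k7 \<le> 4"
    and "k7 \<le> 3"
  shows "l0*k0+l1*k1+l2*k2+l3*k3+l4*k4+l5*k5+l6*k6+l7*k7 \<le> 3*l7+l6+l5+l4-l3-l2-l1-3*l0"
proof -
  have p1: "(l1-l0)*(3-(k1+k2+k3+k4+k5+k6+k7)) \<ge> 0" using assms by (intro mult_nonneg_nonneg) auto
  have p2: "(l2-l1)*(4-(k2+k3+k4+k5+k6+k7)) \<ge> 0" using assms by (intro mult_nonneg_nonneg) auto
  have p3: "(l3-l2)*(5-(k3+k4+k5+k6+k7)) \<ge> 0" using assms by (intro mult_nonneg_nonneg) auto
  have p4: "(l4-l3)*(6-(k4+k5+k6+k7)) \<ge> 0" using assms by (intro mult_nonneg_nonneg) auto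
  have p5: "(l5-l4)*(5-(k5+k6+k7)) \<ge> 0" using assms by (intro mult_nonneg_nonneg) auto
  have p6: "(l6-l5)*(4-(k6+k7)) \<ge> 0" using assms by (intro mult_nonneg_nonneg) auto
  have p7: "(l7-l6)*(3-k7) \<ge> 0" using assms by (intro mult_nonneg_nonneg) auto
  have k0: "k0 = -(k1+k2+k3+k4+k5+k6+k7)" using assms(8) by linarith
  show ?thesis using p1 p2 p3 p4 p5 p6 p7 unfolding k0 by (simp add: algebra_simps)
qed

lemma Dbound:
  fixes r0 r1 r2 r3 r4 r5 r6 r7 s :: real
  assumes "0 \<le> r0" "r0 \<le> 1" "0 \<le> r1" "r1 \<le> 1" "0 \<le> r2" "r2 \<le> 1" "0 \<le> r3" "r3 \<le> 1"
    "0 \<le> r4" "r4 \<le> 1" "0 \<le> r5" "r5 \<le> 1" "0 \<le> r6" "r6 \<le> 1" "0 \<le> r7" "r7 \<le> 1"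
    and "r0+r1+r2+r3+r4+r5+r6+r7 = s"
  shows "-3*r0 - r1 - r2 + r3 - r4 + r5 + r6 + 3*r7 \<le> s + 2"
    and "-3*r0 - r1 - r2 + r3 - r4 + r5 + r6 + 3*r7 \<le> 10 - s"
  using assms by linarith+

lemma red_dims:
  "red_A r \<in> carrier_mat 2 2" "red_B r \<in> carrier_mat 2 2" "red_C r \<in> carrier_mat 2 2"
  unfolding red_A_def red_B_def red_C_def by simp_all

lemma idx8: "a < 2 \<Longrightarrow> b < 2 \<Longrightarrow> c < 2 \<Longrightarrow> 4*a+2*b+c < (8::nat)" by linarith

lemma red_herm:
  assumes r: "\<rho> \<in> carrier_mat 8 8" "hermitian \<rho>"
  shows "hermitian (red_A \<rho>)" "hermitian (red_B \<rho>)" "hermitian (red_C \<rho>)"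
proof -
  have h: "\<And>x y. x < 8 \<Longrightarrow> y < 8 \<Longrightarrow> \<rho> $$ (x,y) = cnj (\<rho> $$ (y,x))" using hermD[OF r(2) r(1)] by blast
  show "hermitian (red_A \<rho>)" unfolding hermitian_def red_A_def
    by (auto simp: cnj_sum intro!: sum.cong h idx8)
  show "hermitian (red_B \<rho>)" unfolding hermitian_def red_B_def
    by (auto simp: cnj_sum intro!: sum.cong h idx8)
  show "hermitian (red_C \<rho>)" unfolding hermitian_def red_C_def
    by (auto simp: cnj_sum intro!: sum.cong h idx8)
qed

lemma sum_times3: "(\<Sum>j\<in>A. ff j * (3 * qq j)) = 3 * (\<Sum>j\<in>A. ff j * (qq j :: real))"
  by (simp add: sum_distrib_left mult.left_commute)

lemma KEY:
  assumes r: "\<rho> \<in> carrier_mat 8 8" "hermitian \<rho>"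
  defines "l \<equiv> eigvals_sorted \<rho>" and "mA \<equiv> eigvals_sorted (red_A \<rho>)"
    and "mB \<equiv> eigvals_sorted (red_B \<rho>)" and "mC \<equiv> eigvals_sorted (red_C \<rho>)"
  shows "(mA!1 - mA!0) + (mB!1 - mB!0) + (mC!1 - mC!0) \<le> 3*l!7 + l!6 + l!5 + l!4 - l!3 - l!2 - l!1 - 3*l!0"
proof -
  obtain W where W: "unitary_ent 8 W" and lenl: "length l = 8"
    and decr: "\<And>x y. x < 8 \<Longrightarrow> y < 8 \<Longrightarrow> \<rho> $$ (x,y) = (\<Sum>k<8. W $$ (x,k) * of_real (l ! k) * cnj (W $$ (y,k)))"
    using spectral[OF r] unfolding l_def by blast
  obtain UA where UA: "unitary_ent 2 UA"
    and decA: "\<And>x y. x < 2 \<Longrightarrow> y < 2 \<Longrightarrow> red_A \<rho> $$ (x,y) = (\<Sum>k<2. UA $$ (x,k) * of_real (mA ! k) * cnj (UA $$ (y,k)))"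
    using spectral[OF red_dims(1) red_herm(1)[OF r]] unfolding mA_def by blast
  obtain UB where UB: "unitary_ent 2 UB"
    and decB: "\<And>x y. x < 2 \<Longrightarrow> y < 2 \<Longrightarrow> red_B \<rho> $$ (x,y) = (\<Sum>k<2. UB $$ (x,k) * of_real (mB ! k) * cnj (UB $$ (y,k)))"
    using spectral[OF red_dims(2) red_herm(2)[OF r]] unfolding mB_def by blast
  obtain UC where UC: "unitary_ent 2 UC"
    and decC: "\<And>x y. x < 2 \<Longrightarrow> y < 2 \<Longrightarrow> red_C \<rho> $$ (x,y) = (\<Sum>k<2. UC $$ (x,k) * of_real (mC ! k) * cnj (UC $$ (y,k)))"
    using spectral[OF red_dims(3) red_herm(3)[OF r]] unfolding mC_def by blast
  have sorted_l: "sorted l" unfolding l_def eigvals_sorted_def by simp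
  define M where "M s1 s2 s3 j = (\<Sum>a<2. \<Sum>b<2. \<Sum>c<2. cnj (UA$$(a,s1)) * cnj (UB$$(b,s2)) * cnj (UC$$(c,s3)) * W $$ (4*a+2*b+c, j))" for s1 s2 s3 j
  define P where "P s1 s2 s3 j = (cmod (M s1 s2 s3 j))^2" for s1 s2 s3 j
  have nsqP: "nsq (M s1 s2 s3 j) = of_real (P s1 s2 s3 j)" for s1 s2 s3 j unfolding P_def nsq_real ..
  have F1A: "of_real (mA ! s) = (\<Sum>j<8. of_real (l ! j) * (\<Sum>u<2. \<Sum>v<2. nsq (\<Sum>a<2. cnj (UA$$(a,s)) * W $$ (4*a+2*u+v, j))))"
    if s: "s < 2" for s
    by (rule F1gen[OF UA s decA _ decr]) (auto simp: red_A_def idx8)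
  have F1B: "of_real (mB ! s) = (\<Sum>j<8. of_real (l ! j) * (\<Sum>u<2. \<Sum>v<2. nsq (\<Sum>b<2. cnj (UB$$(b,s)) * W $$ (4*u+2*b+v, j))))"
    if s: "s < 2" for s
    by (rule F1gen[OF UB s decB _ decr]) (auto simp: red_B_def idx8)
  have F1C: "of_real (mC ! s) = (\<Sum>j<8. of_real (l ! j) * (\<Sum>u<2. \<Sum>v<2. nsq (\<Sum>c<2. cnj (UC$$(c,s)) * W $$ (4*u+2*v+c, j))))"
    if s: "s < 2" for s
    by (rule F1gen[OF UC s decC _ decr]) (auto simp: red_C_def idx8)
  have F2A: "(\<Sum>u<2. \<Sum>v<2. nsq (\<Sum>a<2. cnj (UA$$(a,s)) * W $$ (4*a+2*u+v, j))) = (\<Sum>t2<2. \<Sum>t3<2. nsq (M s t2 t3 j))" for s j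
    unfolding M_def by (rule Lpart[OF UB UC, symmetric])
  have F2B: "(\<Sum>u<2. \<Sum>v<2. nsq (\<Sum>b<2. cnj (UB$$(b,s)) * W $$ (4*u+2*b+v, j))) = (\<Sum>t1<2. \<Sum>t3<2. nsq (M t1 s t3 j))" for s j
  proof -
    have "(\<Sum>t1<2. \<Sum>t3<2. nsq (\<Sum>b<2. \<Sum>a<2. \<Sum>c<2. cnj (UB$$(b,s)) * cnj (UA$$(a,t1)) * cnj (UC$$(c,t3)) * W $$ (4*a+2*b+c, j)))
        = (\<Sum>u<2. \<Sum>v<2. nsq (\<Sum>b<2. cnj (UB$$(b,s)) * W $$ (4*u+2*b+v, j)))"
      by (rule Lpart[OF UA UC])
    moreover have "(\<Sum>b<2. \<Sum>a<2. \<Sum>c<2. cnj (UB$$(b,s)) * cnj (UA$$(a,t1)) * cnj (UC$$(c,t3)) * W $$ (4*a+2*b+c, j)) = M t1 s t3 j" for t1 t3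
      unfolding M_def by (simp add: sum2' algebra_simps)
    ultimately show ?thesis by simp
  qed
  have F2C: "(\<Sum>u<2. \<Sum>v<2. nsq (\<Sum>c<2. cnj (UC$$(c,s)) * W $$ (4*u+2*v+c, j))) = (\<Sum>t1<2. \<Sum>t2<2. nsq (M t1 t2 s j))" for s j
  proof -
    have "(\<Sum>t1<2. \<Sum>t2<2. nsq (\<Sum>c<2. \<Sum>a<2. \<Sum>b<2. cnj (UC$$(c,s)) * cnj (UA$$(a,t1)) * cnj (UB$$(b,t2)) * W $$ (4*a+2*b+c, j)))
        = (\<Sum>u<2. \<Sum>v<2. nsq (\<Sum>c<2. cnj (UC$$(c,s)) * W $$ (4*u+2*v+c, j)))"
      by (rule Lpart[OF UA UB])
    moreover have "(\<Sum>c<2. \<Sum>a<2. \<Sum>b<2. cnj (UC$$(c,s)) * cnj (UA$$(a,t1)) * cnj (UB$$(b,t2)) * W $$ (4*a+2*b+c, j)) = M t1 t2 s j" for t1 t2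
      unfolding M_def by (simp add: sum2' algebra_simps)
    ultimately show ?thesis by simp
  qed
  have RA: "mA ! s = (\<Sum>j<8. l ! j * (\<Sum>t2<2. \<Sum>t3<2. P s t2 t3 j))" if "s < 2" for s
  proof -
    have "complex_of_real (mA ! s) = of_real (\<Sum>j<8. l ! j * (\<Sum>t2<2. \<Sum>t3<2. P s t2 t3 j))"
      unfolding F1A[OF that] F2A nsqP by simp
    then show ?thesis by (simp only: of_real_eq_iff)
  qed
  have RB: "mB ! s = (\<Sum>j<8. l ! j * (\<Sum>t1<2. \<Sum>t3<2. P t1 s t3 j))" if "s < 2" for s
  proof -
    have "complex_of_real (mB ! s) = of_real (\<Sum>j<8. l ! j * (\<Sum>t1<2. \<Sum>t3<2. P t1 s t3 j))"
      unfolding F1B[OF that] F2B nsqP by simp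
    then show ?thesis by (simp only: of_real_eq_iff)
  qed
  have RC: "mC ! s = (\<Sum>j<8. l ! j * (\<Sum>t1<2. \<Sum>t2<2. P t1 t2 s j))" if "s < 2" for s
  proof -
    have "complex_of_real (mC ! s) = of_real (\<Sum>j<8. l ! j * (\<Sum>t1<2. \<Sum>t2<2. P t1 t2 s j))"
      unfolding F1C[OF that] F2C nsqP by simp
    then show ?thesis by (simp only: of_real_eq_iff)
  qed
  have rows: "(\<Sum>j<8. P s1 s2 s3 j) = 1" if "s1 < 2" "s2 < 2" "s3 < 2" for s1 s2 s3
  proof -
    have "complex_of_real (\<Sum>j<8. P s1 s2 s3 j) = (\<Sum>j<8. nsq (M s1 s2 s3 j))" by (simp add: nsqP)
    also have "\<dots> = 1" unfolding M_def by (rule rowsum[OF UA UB UC W that])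
    finally show ?thesis by (simp only: of_real_eq_1_iff)
  qed
  have cols: "(\<Sum>s1<2. \<Sum>s2<2. \<Sum>s3<2. P s1 s2 s3 j) = 1" if "j < 8" for j
  proof -
    have "complex_of_real (\<Sum>s1<2. \<Sum>s2<2. \<Sum>s3<2. P s1 s2 s3 j) = (\<Sum>s1<2. \<Sum>s2<2. \<Sum>s3<2. nsq (M s1 s2 s3 j))"
      by (simp add: nsqP)
    also have "\<dots> = (\<Sum>s1<2. \<Sum>u<2. \<Sum>v<2. nsq (\<Sum>a<2. cnj (UA$$(a,s1)) * W $$ (4*a+2*u+v, j)))"
      by (simp only: F2A)
    also have "\<dots> = 1" by (rule colsum[OF UA W that])
    finally show ?thesis by (simp only: of_real_eq_1_iff)
  qed
  have Pnn: "P s1 s2 s3 j \<ge> 0" for s1 s2 s3 j unfolding P_def by simp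
  define K where "K j = - P 0 0 0 j - P 0 0 0 j - P 0 0 0 j - P 0 0 1 j - P 0 1 0 j + P 0 1 1 j - P 1 0 0 j + P 1 0 1 j + P 1 1 0 j + P 1 1 1 j + P 1 1 1 j + P 1 1 1 j" for j
  have LHS: "(mA!1 - mA!0) + (mB!1 - mB!0) + (mC!1 - mC!0) = (\<Sum>j<8. l ! j * K j)"
    using RA[of 0] RA[of 1] RB[of 0] RB[of 1] RC[of 0] RC[of 1]
    by (simp add: K_def sum2' algebra_simps sum.distrib sum_subtractf sum_times3)
  have tail: "(\<Sum>j\<in>{m..<8}. K j) \<le> (if 8 - real m \<le> 4 then 8 - real m + 2 else 10 - (8 - real m))" if m: "m \<le> 8" for m
  proof -
    define r where "r s1 s2 s3 = (\<Sum>j\<in>{m..<8}. P s1 s2 s3 j)" for s1 s2 s3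
    have r01: "0 \<le> r s1 s2 s3 \<and> r s1 s2 s3 \<le> 1" if "s1 < 2" "s2 < 2" "s3 < 2" for s1 s2 s3
    proof
      show "0 \<le> r s1 s2 s3" unfolding r_def by (rule sum_nonneg) (simp add: Pnn)
      have "r s1 s2 s3 \<le> (\<Sum>j<8. P s1 s2 s3 j)" unfolding r_def
        by (rule sum_mono2) (auto simp: Pnn)
      then show "r s1 s2 s3 \<le> 1" using rows[OF that] by simp
    qed
    have rsum: "(\<Sum>s1<2. \<Sum>s2<2. \<Sum>s3<2. r s1 s2 s3) = 8 - real m"
    proof -
      have "(\<Sum>s1<2. \<Sum>s2<2. \<Sum>s3<2. r s1 s2 s3) = (\<Sum>j\<in>{m..<8}. \<Sum>s1<2. \<Sum>s2<2. \<Sum>s3<2. P s1 s2 s3 j)"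
        unfolding r_def by (simp add: sum2' sum.distrib)
      also have "\<dots> = (\<Sum>j\<in>{m..<8}. 1)" by (rule sum.cong) (auto simp: cols)
      also have "\<dots> = 8 - real m" using m by simp
      finally show ?thesis .
    qed
    have Ksum: "(\<Sum>j\<in>{m..<8}. K j) = - r 0 0 0 - r 0 0 0 - r 0 0 0 - r 0 0 1 - r 0 1 0 + r 0 1 1 - r 1 0 0 + r 1 0 1 + r 1 1 0 + r 1 1 1 + r 1 1 1 + r 1 1 1"
      unfolding K_def r_def by (simp only: sum.distrib sum_subtractf sum_negf)
    have rs: "r 0 0 0 + r 0 0 1 + (r 0 1 0 + r 0 1 1) + (r 1 0 0 + r 1 0 1 + (r 1 1 0 + r 1 1 1)) = 8 - real m"
      using rsum unfolding sum2' .
    have b: "0 \<le> r 0 0 0" "r 0 0 0 \<le> 1" "0 \<le> r 0 0 1" "r 0 0 1 \<le> 1" "0 \<le> r 0 1 0" "r 0 1 0 \<le> 1"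
      "0 \<le> r 0 1 1" "r 0 1 1 \<le> 1" "0 \<le> r 1 0 0" "r 1 0 0 \<le> 1" "0 \<le> r 1 0 1" "r 1 0 1 \<le> 1"
      "0 \<le> r 1 1 0" "r 1 1 0 \<le> 1" "0 \<le> r 1 1 1" "r 1 1 1 \<le> 1"
      using r01[of 0 0 0] r01[of 0 0 1] r01[of 0 1 0] r01[of 0 1 1] r01[of 1 0 0] r01[of 1 0 1] r01[of 1 1 0] r01[of 1 1 1]
      by auto
    have A: "(\<Sum>j\<in>{m..<8}. K j) \<le> 8 - real m + 2" unfolding Ksum using rs b by linarith
    have B: "(\<Sum>j\<in>{m..<8}. K j) \<le> 10 - (8 - real m)" unfolding Ksum using rs b by linarith
    show ?thesis using A B by simp
  qed
  have Ktot: "(\<Sum>j<8. K j) = 0"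
    using rows[of 0 0 0] rows[of 0 0 1] rows[of 0 1 0] rows[of 0 1 1] rows[of 1 0 0] rows[of 1 0 1] rows[of 1 1 0] rows[of 1 1 1]
    unfolding K_def by (simp only: sum.distrib sum_subtractf sum_negf)
  have srt: "l!0 \<le> l!1" "l!1 \<le> l!2" "l!2 \<le> l!3" "l!3 \<le> l!4" "l!4 \<le> l!5" "l!5 \<le> l!6" "l!6 \<le> l!7"
    using sorted_l lenl by (simp_all add: sorted_iff_nth_mono)
  have t1: "K 1 + K 2 + K 3 + K 4 + K 5 + K 6 + K 7 \<le> 3" using tail[of 1] by (simp add: eval_nat_numeral atLeastLessThanSuc add_ac)
  have t2: "K 2 + K 3 + K 4 + K 5 + K 6 + K 7 \<le> 4" using tail[of 2] by (simp add: eval_nat_numeral atLeastLessThanSuc add_ac)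
  have t3: "K 3 + K 4 + K 5 + K 6 + K 7 \<le> 5" using tail[of 3] by (simp add: eval_nat_numeral atLeastLessThanSuc add_ac)
  have t4: "K 4 + K 5 + K 6 + K 7 \<le> 6" using tail[of 4] by (simp add: eval_nat_numeral atLeastLessThanSuc add_ac)
  have t5: "K 5 + K 6 + K 7 \<le> 5" using tail[of 5] by (simp add: eval_nat_numeral atLeastLessThanSuc add_ac)
  have t6: "K 6 + K 7 \<le> 4" using tail[of 6] by (simp add: eval_nat_numeral atLeastLessThanSuc add_ac)
  have t7: "K 7 \<le> 3" using tail[of 7] by (simp add: eval_nat_numeral atLeastLessThanSuc add_ac)
  have t0: "K 0 + K 1 + K 2 + K 3 + K 4 + K 5 + K 6 + K 7 = 0" using Ktot by (simp add: eval_nat_numeral add_ac)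
  have "(\<Sum>j<8. l ! j * K j) = l!0 * K 0 + l!1 * K 1 + l!2 * K 2 + l!3 * K 3 + l!4 * K 4 + l!5 * K 5 + l!6 * K 6 + l!7 * K 7"
    by (simp add: eval_nat_numeral add_ac)
  also have "\<dots> \<le> 3*l!7 + l!6 + l!5 + l!4 - l!3 - l!2 - l!1 - 3*l!0"
    by (rule FIN_core[OF srt t0 t1 t2 t3 t4 t5 t6 t7])
  finally show ?thesis unfolding LHS .
qed

lemma cap2:
  assumes "dim_row h = 2" "eigvals_sorted h = [-c, c]"
  shows "capacity r h = 2 * c * (eigvals_sorted r ! 1 - eigvals_sorted r ! 0)"
  using assms unfolding capacity_def Let_def by (simp add: sum2' algebra_simps)

lemma cap8:
  assumes "dim_row H = 8" "eigvals_sorted H = [-3*c, -c, -c, -c, c, c, c, 3*c]"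
  shows "capacity r H = 2 * c * (let l = eigvals_sorted r in 3*l!7 + l!6 + l!5 + l!4 - l!3 - l!2 - l!1 - 3*l!0)"
  using assms unfolding capacity_def Let_def by (simp add: eval_nat_numeral algebra_simps)

theorem theorem3:
  fixes E :: real and H0 h Hint \<rho> :: "complex mat"
  assumes "E > 0"
    and "(H0 = H0_a E \<and> h = h_a E) \<or> (H0 = H0_b E \<and> h = h_b E)"
    and "Hint \<in> carrier_mat 8 8" and "hermitian Hint"
    and "density_matrix 8 \<rho>"
    and "capacity \<rho> (H0 + Hint) \<ge> capacity \<rho> H0"
  shows "capacity (red_A \<rho>) h + capacity (red_B \<rho>) h + capacity (red_C \<rho>) h
           \<le> capacity \<rho> (H0 + Hint)"
proof -
  have r: "\<rho> \<in> carrier_mat 8 8" "hermitian \<rho>" using assms(5) unfolding density_matrix_def by auto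
  obtain c where c: "c > 0" and evh: "eigvals_sorted h = [-c, c]" and dh: "dim_row h = 2"
    and evH: "eigvals_sorted H0 = [-3*c, -c, -c, -c, c, c, c, 3*c]" and dH: "dim_row H0 = 8"
  proof (cases "H0 = H0_a E \<and> h = h_a E")
    case True
    then have H: "H0 = H0_a E" "h = h_a E" by auto
    show ?thesis
    proof (rule that[of E])
      show "E > 0" by (rule assms(1))
      show "eigvals_sorted h = [- E, E]" unfolding H eig_ha[OF assms(1)] ..
      show "eigvals_sorted H0 = [-3 * E, - E, - E, - E, E, E, E, 3 * E]" unfolding H eig_H0a[OF assms(1)] ..
      show "dim_row h = 2" using ha_carrier[of E] H by auto
      show "dim_row H0 = 8" using H0a_carrier[of E] H by auto
    qed
  next
    case False
    then have H: "H0 = H0_b E" "h = h_b E" using assms(2) by auto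
    have pos: "sqrt 2 * E > 0" using assms(1) by simp
    show ?thesis
    proof (rule that[of "sqrt 2 * E"])
      show "sqrt 2 * E > 0" by (rule pos)
      show "eigvals_sorted h = [- (sqrt 2 * E), sqrt 2 * E]" unfolding H eig_hb eig_ha[OF pos] ..
      show "eigvals_sorted H0 = [-3 * (sqrt 2 * E), - (sqrt 2 * E), - (sqrt 2 * E), - (sqrt 2 * E),
        sqrt 2 * E, sqrt 2 * E, sqrt 2 * E, 3 * (sqrt 2 * E)]" unfolding H eig_H0b eig_H0a[OF pos] ..
      show "dim_row h = 2" using hb_carrier[of E] H by auto
      show "dim_row H0 = 8" using H0b_carrier[of E] H by auto
    qed
  qed
  have key: "(eigvals_sorted (red_A \<rho>) ! 1 - eigvals_sorted (red_A \<rho>) ! 0)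
     + (eigvals_sorted (red_B \<rho>) ! 1 - eigvals_sorted (red_B \<rho>) ! 0)
     + (eigvals_sorted (red_C \<rho>) ! 1 - eigvals_sorted (red_C \<rho>) ! 0)
     \<le> (let l = eigvals_sorted \<rho> in 3*l!7 + l!6 + l!5 + l!4 - l!3 - l!2 - l!1 - 3*l!0)"
    using KEY[OF r] unfolding Let_def by simp
  have "capacity (red_A \<rho>) h + capacity (red_B \<rho>) h + capacity (red_C \<rho>) h
     = 2 * c * ((eigvals_sorted (red_A \<rho>) ! 1 - eigvals_sorted (red_A \<rho>) ! 0)
     + (eigvals_sorted (red_B \<rho>) ! 1 - eigvals_sorted (red_B \<rho>) ! 0)
     + (eigvals_sorted (red_C \<rho>) ! 1 - eigvals_sorted (red_C \<rho>) ! 0))"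
    unfolding cap2[OF dh evh] by (simp add: algebra_simps)
  also have "\<dots> \<le> 2 * c * (let l = eigvals_sorted \<rho> in 3*l!7 + l!6 + l!5 + l!4 - l!3 - l!2 - l!1 - 3*l!0)"
    using key c by (intro mult_left_mono) auto
  also have "\<dots> = capacity \<rho> H0" by (rule cap8[OF dH evH, symmetric])
  also have "\<dots> \<le> capacity \<rho> (H0 + Hint)" by (rule assms(6))
  finally show ?thesis .
qed

end
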